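(* Let $\mathcal C$ be a $C^*$-algebra with unit $e$ and let $t\in\mathcal C$ satisfy $t^*t\ge e$. Set $t'=t(t^*t)^{-1}$, $c_k=t'^{*k}t'^k$ and $p_k=t'^kc_k^{-1}t'^{*k}$, $u_k=t'^{k+1}c_k^{-1}t'^{*(k+1)}$, $v_k=t'^kc_k^{-1}c_{k+1}c_k^{-1}t'^{*k}$ for $k\in\mathbb Z_+$. Then for all $k\in\mathbb Z_+$: (i) $p_k=p_k^*p_k$, $p_kp_{k+1}=p_{k+1}$ and $0\le p_{k+1}\le p_k\le e$; (ii) $0\le c_{k+1}\le c_k\le e$ and $c_k^{-1/2}c_{k+1}c_k^{-1/2}\le e$; (iii) $u_k=t'p_kt'^*$, $0\le t'^{k+1}t'^{*(k+1)}\le u_k\le p_{k+1}\le e$ and $u_{k+1}\le u_k$; (iv) $v_{k+1}=p_{k+1}v_kp_{k+1}$, $v_k=p_kt'^*t'p_k$ and $0\le v_k\le p_k\le e$. Moreover, $t$ is an expansive element of $C^*(t)$ and $t',c_k,c_k^{-1},p_k,u_k,v_k$ belong to $C^*(t)$.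
   Context: $C^*(t)$ is the $C^*$-subalgebra of $\mathcal C$ generated by $t$ and $e$. Since $t^*t\ge e$, $t^*t$ is invertible and each $c_k$ is invertible. An element $s$ is expansive if $s^*s\ge e$. *)

theory Defs
  imports "HOL-Analysis.Analysis"
begin

text \<open>The carrier is a type 'a that is a real Banach algebra with
unit 1 (norm 1 = 1); the complex scalar multiplication scaleC and the involution star
are parameters, subject to the axioms below.\<close>

definition cstar_algebra ::
  "(complex \<Rightarrow> 'a::{banach, real_normed_algebra_1} \<Rightarrow> 'a) \<Rightarrow> ('a \<Rightarrow> 'a) \<Rightarrow> bool" where
  "cstar_algebra scaleC star \<longleftrightarrow>
     (\<forall>x. scaleC 1 x = x) \<and>
     (\<forall>a b x. scaleC (a * b) x = scaleC a (scaleC b x)) \<and>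
     (\<forall>a b x. scaleC (a + b) x = scaleC a x + scaleC b x) \<and>
     (\<forall>a x y. scaleC a (x + y) = scaleC a x + scaleC a y) \<and>
     (\<forall>r x. scaleC (complex_of_real r) x = scaleR r x) \<and>
     (\<forall>a x y. scaleC a (x * y) = scaleC a x * y \<and> scaleC a (x * y) = x * scaleC a y) \<and>
     (\<forall>a x. norm (scaleC a x) = cmod a * norm x) \<and>
     (\<forall>x. star (star x) = x) \<and>
     (\<forall>x y. star (x + y) = star x + star y) \<and>
     (\<forall>a x. star (scaleC a x) = scaleC (cnj a) (star x)) \<and>
     (\<forall>x y. star (x * y) = star y * star x) \<and>
     (\<forall>x. norm (star x * x) = norm x ^ 2)"

definition inv_el :: "'a::ring_1 \<Rightarrow> 'a" where
  "inv_el x = (THE y. x * y = 1 \<and> y * x = 1)"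

definition spec_in ::
  "(complex \<Rightarrow> 'a::ring_1 \<Rightarrow> 'a) \<Rightarrow> 'a set \<Rightarrow> 'a \<Rightarrow> complex set" where
  "spec_in scaleC S a =
     {z. \<not> (\<exists>b\<in>S. b * (a - scaleC z 1) = 1 \<and> (a - scaleC z 1) * b = 1)}"

definition positive_in ::
  "(complex \<Rightarrow> 'a::ring_1 \<Rightarrow> 'a) \<Rightarrow> ('a \<Rightarrow> 'a) \<Rightarrow> 'a set \<Rightarrow> 'a \<Rightarrow> bool" where
  "positive_in scaleC star S a \<longleftrightarrow>
     a \<in> S \<and> star a = a \<and>
     (\<forall>z\<in>spec_in scaleC S a. Im z = 0 \<and> Re z \<ge> 0)"

definition le_in ::
  "(complex \<Rightarrow> 'a::ring_1 \<Rightarrow> 'a) \<Rightarrow> ('a \<Rightarrow> 'a) \<Rightarrow> 'a set \<Rightarrow> 'a \<Rightarrow> 'a \<Rightarrow> bool" where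
  "le_in scaleC star S a b \<longleftrightarrow> a \<in> S \<and> b \<in> S \<and> star a = a \<and> star b = b \<and>
     positive_in scaleC star S (b - a)"

text \<open>Positive square root of a positive element (unique by continuous functional calculus).\<close>
definition psqrt ::
  "(complex \<Rightarrow> 'a::ring_1 \<Rightarrow> 'a) \<Rightarrow> ('a \<Rightarrow> 'a) \<Rightarrow> 'a \<Rightarrow> 'a" where
  "psqrt scaleC star x = (THE y. positive_in scaleC star UNIV y \<and> y * y = x)"

definition cstar_subalg ::
  "(complex \<Rightarrow> 'a::{real_normed_algebra_1} \<Rightarrow> 'a) \<Rightarrow> ('a \<Rightarrow> 'a) \<Rightarrow> 'a set \<Rightarrow> bool" where
  "cstar_subalg scaleC star B \<longleftrightarrow> closed B \<and> 1 \<in> B \<and>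
     (\<forall>x\<in>B. \<forall>y\<in>B. x + y \<in> B \<and> x * y \<in> B) \<and>
     (\<forall>a. \<forall>x\<in>B. scaleC a x \<in> B) \<and> (\<forall>x\<in>B. star x \<in> B)"

definition cstar_gen ::
  "(complex \<Rightarrow> 'a::{real_normed_algebra_1} \<Rightarrow> 'a) \<Rightarrow> ('a \<Rightarrow> 'a) \<Rightarrow> 'a \<Rightarrow> 'a set" where
  "cstar_gen scaleC star t = \<Inter>{B. cstar_subalg scaleC star B \<and> t \<in> B}"

definition tp :: "('a::ring_1 \<Rightarrow> 'a) \<Rightarrow> 'a \<Rightarrow> 'a" where
  "tp star t = t * inv_el (star t * t)"

definition ck :: "('a::ring_1 \<Rightarrow> 'a) \<Rightarrow> 'a \<Rightarrow> nat \<Rightarrow> 'a" where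
  "ck star t k = (star (tp star t)) ^ k * (tp star t) ^ k"

definition pk :: "('a::ring_1 \<Rightarrow> 'a) \<Rightarrow> 'a \<Rightarrow> nat \<Rightarrow> 'a" where
  "pk star t k = (tp star t) ^ k * inv_el (ck star t k) * (star (tp star t)) ^ k"

definition uk :: "('a::ring_1 \<Rightarrow> 'a) \<Rightarrow> 'a \<Rightarrow> nat \<Rightarrow> 'a" where
  "uk star t k = (tp star t) ^ (k + 1) * inv_el (ck star t k) * (star (tp star t)) ^ (k + 1)"

definition vk :: "('a::ring_1 \<Rightarrow> 'a) \<Rightarrow> 'a \<Rightarrow> nat \<Rightarrow> 'a" where
  "vk star t k = (tp star t) ^ k * inv_el (ck star t k) * ck star t (k + 1) *
                 inv_el (ck star t k) * (star (tp star t)) ^ k"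

end

theory Submission
  imports Defs "HOL-Computational_Algebra.Formal_Power_Series"
begin
locale cstar =
  fixes sc :: "complex \<Rightarrow> 'a::{banach, real_normed_algebra_1} \<Rightarrow> 'a"
    and st :: "'a \<Rightarrow> 'a"
  assumes C: "cstar_algebra sc st"
begin

lemma sc_one[simp]: "sc 1 x = x" using C[unfolded cstar_algebra_def] by (elim conjE) simp
lemma sc_assoc[simp]: "sc a (sc b x) = sc (a * b) x" using C[unfolded cstar_algebra_def] by (elim conjE) simp
lemma sc_addL: "sc (a + b) x = sc a x + sc b x" using C[unfolded cstar_algebra_def] by (elim conjE) simp
lemma sc_addR: "sc a (x + y) = sc a x + sc a y" using C[unfolded cstar_algebra_def] by (elim conjE) simp
lemma sc_real[simp]: "sc (complex_of_real r) x = r *\<^sub>R x" using C[unfolded cstar_algebra_def] by (elim conjE) simp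
lemma sc_mulL: "sc a (x * y) = sc a x * y" using C[unfolded cstar_algebra_def] by (elim conjE) simp
lemma sc_mulR: "sc a (x * y) = x * sc a y" using C[unfolded cstar_algebra_def] by (elim conjE) metis
lemma norm_sc[simp]: "norm (sc a x) = cmod a * norm x" using C[unfolded cstar_algebra_def] by (elim conjE) simp
lemma st_st[simp]: "st (st x) = x" using C[unfolded cstar_algebra_def] by (elim conjE) simp
lemma st_add[simp]: "st (x + y) = st x + st y" using C[unfolded cstar_algebra_def] by (elim conjE) simp
lemma st_sc[simp]: "st (sc a x) = sc (cnj a) (st x)" using C[unfolded cstar_algebra_def] by (elim conjE) simp
lemma st_mult[simp]: "st (x * y) = st y * st x" using C[unfolded cstar_algebra_def] by (elim conjE) simp
lemma cstar_id: "norm (st x * x) = norm x ^ 2" using C[unfolded cstar_algebra_def] by (elim conjE) simp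

lemma sc_zero[simp]: "sc 0 x = 0"
  using sc_real[of 0 x] by simp
lemma sc_zeroR[simp]: "sc a 0 = 0"
  by (metis norm_eq_zero mult_zero_right norm_zero norm_sc)
lemma sc_minusR: "sc a (- x) = - sc a x"
  using sc_addR[of a x "-x"] by (simp add: add_eq_0_iff)
lemma sc_diffR: "sc a (x - y) = sc a x - sc a y"
  using sc_addR[of a x "-y"] by (simp add: sc_minusR)
lemma sc_minusL: "sc (- a) x = - sc a x"
  using sc_addL[of a "-a" x] by (simp add: add_eq_0_iff)
lemma sc_diffL: "sc (a - b) x = sc a x - sc b x"
  using sc_addL[of a "-b" x] by (simp add: sc_minusL)
lemma sc_numeral[simp]: "sc (numeral n) x = numeral n *\<^sub>R x"
  using sc_real[of "numeral n" x] by simp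
lemma sc_of_nat[simp]: "sc (of_nat n) x = of_nat n *\<^sub>R x"
  using sc_real[of "of_nat n" x] by simp
lemma sc_neg1[simp]: "sc (-1) x = - x"
  by (simp add: sc_minusL)

lemma sc_mul_1L: "sc a 1 * x = sc a x" by (metis mult_1_left sc_mulL)
lemma sc_mul_1R: "x * sc a 1 = sc a x" by (metis mult_1_right sc_mulR)
lemma sc_mul_both: "sc a x * sc b y = sc (a*b) (x * y)"
proof -
  have "sc a x * sc b y = sc a (x * sc b y)" by (simp add: sc_mulL)
  also have "\<dots> = sc a (sc b (x * y))" by (simp add: sc_mulR)
  finally show ?thesis by simp
qed
lemma sc_pow: "(sc z x) ^ n = sc (z ^ n) (x ^ n)"
  by (induction n) (simp_all add: sc_mul_both)
lemma sc_scaleR: "sc a (r *\<^sub>R x) = r *\<^sub>R sc a x"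
proof -
  have "sc a (r *\<^sub>R x) = sc a (sc (complex_of_real r) x)" by (simp only: sc_real)
  also have "\<dots> = sc (complex_of_real r) (sc a x)"
    using mult.commute[of a "complex_of_real r"] by (simp only: sc_assoc)
  finally show ?thesis by (simp only: sc_real)
qed
lemma sc_sum: "sc a (sum f A) = sum (\<lambda>i. sc a (f i)) A"
  by (induction A rule: infinite_finite_induct) (simp_all add: sc_addR)

lemma st_zero[simp]: "st 0 = 0"
  using st_add[of 0 0] by simp
lemma st_one[simp]: "st 1 = 1"
proof -
  have "st (st 1 * 1) = st 1 * st (st 1)" by (rule st_mult)
  then show ?thesis by simp
qed
lemma st_minus[simp]: "st (- x) = - st x"
  using st_add[of x "-x"] by (simp add: add_eq_0_iff)
lemma st_diff[simp]: "st (x - y) = st x - st y"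
  using st_add[of x "-y"] by simp
lemma st_scaleR[simp]: "st (r *\<^sub>R x) = r *\<^sub>R st x"
  using st_sc[of "complex_of_real r" x] by simp
lemma st_pow: "st (x ^ n) = (st x) ^ n"
  by (induction n) (simp_all add: power_commutes)
lemma st_sum: "st (sum f A) = sum (\<lambda>i. st (f i)) A"
  by (induction A rule: infinite_finite_induct) simp_all
lemma st_of_real[simp]: "st (of_real r) = of_real r"
proof -
  have "st (r *\<^sub>R 1) = r *\<^sub>R 1" by (simp only: st_scaleR st_one)
  then show ?thesis by (simp add: scaleR_conv_of_real)
qed

lemma norm_st[simp]: "norm (st x) = norm x"
proof -
  have a: "norm y \<le> norm (st y)" for y
  proof (cases "y = 0")
    case True then show ?thesis by simp
  next
    case False
    have "norm y ^ 2 \<le> norm (st y) * norm y"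
      using cstar_id[of y] norm_mult_ineq[of "st y" y] by simp
    then show ?thesis using False by (simp add: power2_eq_square)
  qed
  show ?thesis using a[of x] a[of "st x"] by simp
qed

lemma cstar_id': "norm (x * st x) = norm x ^ 2"
  using cstar_id[of "st x"] by simp

lemma bounded_linear_st: "bounded_linear st"
  by (rule bounded_linear_intro[where K=1]) simp_all

lemma st_suminf: "summable f \<Longrightarrow> st (suminf f) = suminf (\<lambda>n. st (f n))"
  using bounded_linear.suminf[OF bounded_linear_st] by metis

lemma bounded_linear_sc: "bounded_linear (sc a)"
  by (rule bounded_linear_intro[where K="cmod a"]) (simp_all add: sc_addR sc_scaleR)

lemma sa_norm_sq: "st h = h \<Longrightarrow> norm (h * h) = norm h ^ 2"
  using cstar_id[of h] by simp

lemma sa_norm_pow2: "st h = h \<Longrightarrow> norm (h ^ (2 ^ k)) = norm h ^ (2 ^ k)"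
proof (induction k)
  case 0 then show ?case by simp
next
  case (Suc k)
  have e: "h ^ (2 ^ Suc k) = h ^ (2^k) * h ^ (2^k)"
    by (simp add: power_add[symmetric] mult_2)
  have "st (h ^ (2^k)) = h ^ (2^k)" using Suc.prems by (simp add: st_pow)
  then have "norm (h ^ (2 ^ Suc k)) = norm (h ^ (2^k)) ^ 2" using e sa_norm_sq by metis
  also have "\<dots> = norm h ^ (2 ^ Suc k)" using Suc by (simp add: power_mult[symmetric] mult.commute)
  finally show ?case .
qed

end

context cstar begin

lemma norm_mult3: "norm (a * b * c) \<le> norm a * norm b * norm (c::'a)"
proof -
  have "norm (a * b * c) \<le> norm (a * b) * norm c" by (rule norm_mult_ineq)
  also have "\<dots> \<le> norm a * norm b * norm c" by (rule mult_right_mono[OF norm_mult_ineq norm_ge_zero])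
  finally show ?thesis .
qed

definition invble :: "'a \<Rightarrow> bool" where
  "invble x \<longleftrightarrow> (\<exists>y. x * y = 1 \<and> y * x = 1)"

lemma inv_el_eq: assumes "x * y = 1" "y * x = 1" shows "inv_el x = y"
  unfolding inv_el_def
proof (rule the_equality)
  show "x * y = 1 \<and> y * x = 1" using assms by simp
  fix z assume "x * z = 1 \<and> z * x = 1"
  then have "z = (y * x) * z" using assms by simp
  also have "\<dots> = y" using \<open>x * z = 1 \<and> z * x = 1\<close> by (simp add: mult.assoc)
  finally show "z = y" .
qed

lemma invble_I: "x * y = 1 \<Longrightarrow> y * x = 1 \<Longrightarrow> invble x"
  unfolding invble_def by blast

lemma inv_right[simp]: "invble x \<Longrightarrow> x * inv_el x = 1"
  unfolding invble_def using inv_el_eq by blast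
lemma inv_left[simp]: "invble x \<Longrightarrow> inv_el x * x = 1"
  unfolding invble_def using inv_el_eq by blast

lemma inv_right_assoc: "invble x \<Longrightarrow> x * (inv_el x * y) = y"
  by (simp add: mult.assoc[symmetric])
lemma inv_left_assoc: "invble x \<Longrightarrow> inv_el x * (x * y) = y"
  by (simp add: mult.assoc[symmetric])

lemma invble_left_right: assumes "x * y = 1" "z * x = 1" shows "invble x" "inv_el x = y"
proof -
  have "z = y" using assms by (metis mult.assoc mult_1_left mult_1_right)
  then show "invble x" "inv_el x = y" using assms invble_I inv_el_eq by auto
qed

lemma invble_one[simp]: "invble 1" and inv_one[simp]: "inv_el 1 = 1"
  using invble_I[of 1 1] inv_el_eq[of 1 1] by auto

lemma invble_inv: "invble x \<Longrightarrow> invble (inv_el x)" and inv_inv: "invble x \<Longrightarrow> inv_el (inv_el x) = x"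
  using invble_I[of "inv_el x" x] inv_el_eq[of "inv_el x" x] by auto

lemma invble_mult: assumes "invble x" "invble y" shows "invble (x * y)"
  and "inv_el (x * y) = inv_el y * inv_el x"
proof -
  have a: "x * y * (inv_el y * inv_el x) = 1"
    using assms by (simp add: mult.assoc inv_right_assoc)
  have b: "inv_el y * inv_el x * (x * y) = 1"
    using assms by (simp add: mult.assoc inv_left_assoc)
  show "invble (x * y)" "inv_el (x * y) = inv_el y * inv_el x"
    using invble_I[OF a b] inv_el_eq[OF a b] by auto
qed

lemma invble_st: assumes "invble x" shows "invble (st x)" and "inv_el (st x) = st (inv_el x)"
proof -
  have a: "st x * st (inv_el x) = 1" using assms by (metis st_mult inv_left st_one)
  have b: "st (inv_el x) * st x = 1" using assms by (metis st_mult inv_right st_one)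
  show "invble (st x)" "inv_el (st x) = st (inv_el x)"
    using invble_I[OF a b] inv_el_eq[OF a b] by auto
qed

lemma sa_inv: "invble x \<Longrightarrow> st x = x \<Longrightarrow> st (inv_el x) = inv_el x"
  using invble_st by metis

lemma invble_sc: assumes "invble x" "z \<noteq> 0" shows "invble (sc z x)"
  and "inv_el (sc z x) = sc (1/z) (inv_el x)"
proof -
  have a: "sc z x * sc (1/z) (inv_el x) = 1" using assms by (simp add: sc_mul_both)
  have b: "sc (1/z) (inv_el x) * sc z x = 1" using assms by (simp add: sc_mul_both)
  show "invble (sc z x)" "inv_el (sc z x) = sc (1/z) (inv_el x)"
    using invble_I[OF a b] inv_el_eq[OF a b] by auto
qed

lemma comm_inv: assumes "invble b" "a * b = b * a" shows "a * inv_el b = inv_el b * a"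
proof -
  have "a * inv_el b = (inv_el b * b) * a * inv_el b" using assms by simp
  also have "\<dots> = inv_el b * (b * a) * inv_el b" by (simp only: mult.assoc)
  also have "\<dots> = inv_el b * (a * b) * inv_el b" by (simp only: assms(2))
  also have "\<dots> = inv_el b * a * (b * inv_el b)" by (simp only: mult.assoc)
  also have "\<dots> = inv_el b * a" using assms by simp
  finally show ?thesis .
qed

lemma invble_comm_factor: assumes "x * y = y * x" "invble (x * y)" shows "invble x"
proof -
  let ?w = "inv_el (x * y)"
  have "x * (x * y) = (x * y) * x" by (metis mult.assoc assms(1))
  then have c: "x * ?w = ?w * x"
    using comm_inv[OF assms(2), of x] by simp
  have a: "x * (y * ?w) = 1" using assms by (simp add: mult.assoc[symmetric])
  have "(y * ?w) * x = y * (x * ?w)" using c by (simp add: mult.assoc)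
  also have "\<dots> = 1" using assms by (simp add: mult.assoc[symmetric])
  finally show ?thesis using invble_I[OF a] by blast
qed

lemma invble_comm_factor2: assumes "x * y = y * x" "invble (x * y)" shows "invble y"
  using invble_comm_factor[of y x] assms by simp

lemma invble_neg: "invble x \<Longrightarrow> invble (- x)"
  using invble_I[of "-x" "- inv_el x"] by simp

lemma invble_scaleR: "invble x \<Longrightarrow> r \<noteq> 0 \<Longrightarrow> invble (r *\<^sub>R x)"
  using invble_sc[of x "complex_of_real r"] by simp

text \<open>Neumann series\<close>

lemma summable_pow: fixes x :: 'a assumes "norm x < 1" shows "summable (\<lambda>n. norm (x ^ n))"
proof (rule summable_comparison_test[where g="\<lambda>n. norm x ^ n"])
  show "\<exists>N. \<forall>n\<ge>N. norm (norm (x ^ n)) \<le> norm x ^ n"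
    by (intro exI[of _ 0] allI impI) (metis norm_power_ineq real_norm_def abs_norm_cancel)
  show "summable (\<lambda>n. norm x ^ n)" using assms by (simp add: summable_geometric)
qed

lemma neumann: assumes "norm x < 1"
  shows "invble (1 - x)" "inv_el (1 - x) = (\<Sum>n. x ^ n)"
    "norm (inv_el (1 - x)) \<le> 1 / (1 - norm x)"
proof -
  have sn: "summable (\<lambda>n. norm (x ^ n))" using summable_pow[OF assms] .
  then have s: "summable (\<lambda>n. x ^ n)" by (rule summable_norm_cancel)
  let ?S = "\<Sum>n. x ^ n"
  have h: "(\<Sum>n. x ^ Suc n) = ?S - 1" using suminf_split_head[OF s] by simp
  have l: "x * ?S = (\<Sum>n. x ^ Suc n)" using suminf_mult[OF s, of x] by simp
  have r: "?S * x = (\<Sum>n. x ^ Suc n)" using suminf_mult2[OF s, of x] by (simp add: power_commutes)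
  have a: "(1 - x) * ?S = 1" using l h by (simp add: left_diff_distrib)
  have b: "?S * (1 - x) = 1" using r h by (simp add: right_diff_distrib)
  show "invble (1 - x)" "inv_el (1 - x) = ?S" using invble_I[OF a b] inv_el_eq[OF a b] by auto
  have "norm ?S \<le> (\<Sum>n. norm (x ^ n))" by (rule summable_norm[OF sn])
  also have "\<dots> \<le> (\<Sum>n. norm x ^ n)"
    by (rule suminf_le) (simp_all add: norm_power_ineq sn summable_geometric assms)
  also have "\<dots> = 1 / (1 - norm x)" using suminf_geometric[of "norm x"] assms by simp
  finally show "norm (inv_el (1 - x)) \<le> 1 / (1 - norm x)" using \<open>inv_el (1 - x) = ?S\<close> by simp
qed

lemma subalg_pow: assumes "cstar_subalg sc st B" "x \<in> B" shows "x ^ n \<in> B"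
  using assms by (induction n) (auto simp: cstar_subalg_def)

lemma subalg_sum: fixes f :: "nat \<Rightarrow> 'a"
  assumes "cstar_subalg sc st B" "\<And>i. f i \<in> B" shows "sum f {..<n} \<in> B"
proof (induction n)
  case 0
  have "0 = sc 0 1" by simp
  then show ?case using assms(1) unfolding cstar_subalg_def by (metis lessThan_0 sum.empty)
next
  case (Suc n) then show ?case using assms unfolding cstar_subalg_def by simp
qed

lemma subalg_neumann: assumes "cstar_subalg sc st B" "x \<in> B" "norm x < 1"
  shows "inv_el (1 - x) \<in> B"
proof -
  have s: "summable (\<lambda>n. x ^ n)" using summable_norm_cancel[OF summable_pow[OF assms(3)]] .
  have l: "(\<lambda>n. sum (\<lambda>i. x ^ i) {..<n}) \<longlonglongrightarrow> (\<Sum>n. x ^ n)"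
    using s by (rule summable_LIMSEQ)
  have c: "closed B" using assms(1) unfolding cstar_subalg_def by blast
  have m: "\<And>n. sum (\<lambda>i. x ^ i) {..<n} \<in> B" by (rule subalg_sum[OF assms(1) subalg_pow[OF assms(1,2)]])
  have "(\<Sum>n. x ^ n) \<in> B" by (rule closed_sequentially[OF c m l])
  then show ?thesis using neumann[OF assms(3)] by simp
qed

lemma invble_perturb: assumes "invble a" "norm (x - a) * norm (inv_el a) < 1"
  shows "invble x" "norm (inv_el x) \<le> norm (inv_el a) / (1 - norm (inv_el a) * norm (x - a))"
    "norm (inv_el x - inv_el a) \<le> norm (inv_el x) * norm (x - a) * norm (inv_el a)"
proof -
  let ?y = "inv_el a * (a - x)"
  have ny: "norm ?y \<le> norm (inv_el a) * norm (x - a)"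
    using norm_mult_ineq[of "inv_el a" "a - x"] by (simp add: norm_minus_commute)
  then have ny1: "norm ?y < 1" using assms(2) by (simp add: mult.commute)
  have xe: "x = a * (1 - ?y)" using assms(1) by (simp add: right_diff_distrib inv_right_assoc)
  have iy: "invble (1 - ?y)" using neumann(1)[OF ny1] .
  show ix: "invble x" using xe invble_mult(1)[OF assms(1) iy] by simp
  have ie: "inv_el x = inv_el (1 - ?y) * inv_el a" using xe invble_mult(2)[OF assms(1) iy] by simp
  have "norm (inv_el x) \<le> norm (inv_el (1 - ?y)) * norm (inv_el a)"
    using ie norm_mult_ineq by metis
  also have "\<dots> \<le> 1 / (1 - norm ?y) * norm (inv_el a)"
    by (rule mult_right_mono[OF neumann(3)[OF ny1]]) simp
  also have "\<dots> \<le> 1 / (1 - norm (inv_el a) * norm (x - a)) * norm (inv_el a)"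
  proof (rule mult_right_mono)
    have "0 < 1 - norm (inv_el a) * norm (x - a)" using assms(2) by (simp add: mult.commute)
    then show "1 / (1 - norm ?y) \<le> 1 / (1 - norm (inv_el a) * norm (x - a))"
      using ny ny1 by (simp add: frac_le)
  qed simp
  finally show "norm (inv_el x) \<le> norm (inv_el a) / (1 - norm (inv_el a) * norm (x - a))" by simp
  have "inv_el x - inv_el a = inv_el x * (a - x) * inv_el a"
    using ix assms(1) by (simp add: algebra_simps inv_left_assoc mult.assoc)
  then have "norm (inv_el x - inv_el a) \<le> norm (inv_el x) * norm (a - x) * norm (inv_el a)"
    by (simp add: norm_mult3)
  then show "norm (inv_el x - inv_el a) \<le> norm (inv_el x) * norm (x - a) * norm (inv_el a)"
    by (simp add: norm_minus_commute)
qed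

lemma spec_UNIV: "spec_in sc UNIV a = {z. \<not> invble (a - sc z 1)}"
  unfolding spec_in_def invble_def by auto

lemma big_invble: assumes "norm a < cmod z" shows "invble (a - sc z 1)"
proof -
  have z: "z \<noteq> 0" using assms by (metis norm_ge_zero norm_zero not_less)
  have n: "norm (sc (1/z) a) < 1" using assms z by (simp add: norm_divide field_simps)
  have "a - sc z 1 = sc (- z) (1 - sc (1/z) a)" using z
    by (simp add: sc_diffR sc_minusL)
  then show ?thesis using invble_sc(1)[OF neumann(1)[OF n], of "-z"] z by simp
qed

lemma spec_bound: "\<not> invble (a - sc z 1) \<Longrightarrow> cmod z \<le> norm a"
  using big_invble[of a z] by (meson not_le)

lemma sc_one_mult_comm: "sc z 1 * x = x * sc z 1"
  by (simp add: sc_mul_1L sc_mul_1R)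

end

context cstar begin

definition J :: 'a where "J = sc \<i> 1"

lemma JJ: "J * J = -1" unfolding J_def by (simp add: sc_mul_both)
lemma st_J[simp]: "st J = - J" unfolding J_def by (simp add: sc_minusL)
lemma J_comm: "J * x = x * J" unfolding J_def by (simp add: sc_mul_1L sc_mul_1R)
lemma sc_decomp: "sc z x = Re z *\<^sub>R x + Im z *\<^sub>R (J * x)"
proof -
  have "z = complex_of_real (Re z) + \<i> * complex_of_real (Im z)" by (simp add: complex_eq_iff)
  then have "sc z x = sc (complex_of_real (Re z)) x + sc \<i> (sc (complex_of_real (Im z)) x)"
    by (metis sc_addL sc_assoc)
  also have "\<dots> = Re z *\<^sub>R x + Im z *\<^sub>R (J * x)"
    by (simp add: sc_scaleR J_def sc_mul_1L)
  finally show ?thesis .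
qed
lemma sc_decomp1: "sc z 1 = Re z *\<^sub>R 1 + Im z *\<^sub>R J"
  using sc_decomp[of z 1] by simp

lemma realness: assumes h: "st h = h" and y: "Im z \<noteq> 0" shows "invble (h - sc z 1)"
proof (rule ccontr)
  assume ni: "\<not> invble (h - sc z 1)"
  define g where "g = h - (Re z) *\<^sub>R 1"
  have sg: "st g = g" using h by (simp add: g_def)
  define y0 where "y0 = Im z"
  define l where "l = (norm g ^ 2 + 1) / (2 * y0)"
  define u where "u = g + l *\<^sub>R J"
  have "u - sc (\<i> * complex_of_real (y0 + l)) 1 = h - sc z 1"
    unfolding u_def g_def y0_def by (simp add: sc_decomp1 algebra_simps)
  then have "\<not> invble (u - sc (\<i> * complex_of_real (y0 + l)) 1)" using ni by simp
  then have "cmod (\<i> * complex_of_real (y0 + l)) \<le> norm u" by (rule spec_bound)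
  then have b1: "\<bar>y0 + l\<bar> \<le> norm u" by (simp add: norm_mult flip: of_real_add)
  have su: "st u = g - l *\<^sub>R J" by (simp add: u_def sg)
  have "st u * u = g * g + l *\<^sub>R (g * J) - l *\<^sub>R (J * g) - (l * l) *\<^sub>R (J * J)"
    unfolding su u_def by (simp add: algebra_simps sg)
  also have "\<dots> = g * g + (l^2) *\<^sub>R 1"
    by (simp add: J_comm[of g] JJ power2_eq_square)
  finally have "st u * u = g * g + (l^2) *\<^sub>R 1" .
  then have "norm u ^ 2 = norm (g * g + (l^2) *\<^sub>R 1)" using cstar_id[of u] by simp
  also have "\<dots> \<le> norm g ^ 2 + l ^ 2"
    by (rule order_trans[OF norm_triangle_ineq]) (simp add: norm_mult_ineq power2_eq_square)
  finally have b2: "norm u ^ 2 \<le> norm g ^ 2 + l ^ 2" .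
  have "(y0 + l)^2 \<le> norm u ^ 2" using b1
    by (metis abs_ge_zero power2_abs power_mono)
  then have "(y0 + l)^2 \<le> norm g ^ 2 + l^2" using b2 by linarith
  then have "y0^2 + 2 * y0 * l \<le> norm g ^ 2" by (simp add: power2_eq_square algebra_simps)
  moreover have "2 * y0 * l = norm g ^ 2 + 1" using y by (simp add: l_def y0_def)
  moreover have "0 \<le> y0^2" by simp
  ultimately show False by linarith
qed

lemma sa_spec_real: "st h = h \<Longrightarrow> \<not> invble (h - sc z 1) \<Longrightarrow> Im z = 0"
  using realness by blast

text \<open>Roots of unity averaging\<close>

definition om :: "nat \<Rightarrow> complex" where "om k = exp (2 * pi * \<i> / 2 ^ k)"

lemma om_0: "om 0 = 1" unfolding om_def by simp
lemma om_sq: "om (Suc k) ^ 2 = om k"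
proof -
  have "om (Suc k) ^ 2 = exp (of_nat 2 * (2 * pi * \<i> / 2 ^ Suc k))"
    unfolding om_def by (simp only: exp_of_nat_mult)
  also have "of_nat 2 * (2 * pi * \<i> / 2 ^ Suc k) = 2 * pi * \<i> / 2 ^ k" by simp
  finally show ?thesis unfolding om_def .
qed
lemma om_half: "om (Suc k) ^ (2 ^ k) = -1"
proof -
  have "om (Suc k) ^ (2^k) = exp (of_nat (2^k) * (2 * pi * \<i> / 2 ^ Suc k))"
    unfolding om_def by (simp only: exp_of_nat_mult)
  also have "of_nat (2^k) * (2 * pi * \<i> / 2 ^ Suc k) = \<i> * complex_of_real pi" by simp
  finally show ?thesis using exp_pi_i' by simp
qed
lemma norm_om_pow: "cmod (om k ^ j) = 1"
proof -
  have "om k = exp (\<i> * complex_of_real (2 * pi / 2 ^ k))" unfolding om_def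
    by (simp add: mult.commute mult.left_commute)
  then show ?thesis by (simp add: norm_power norm_exp_i_times)
qed

lemma sum_split_nat: "sum f {..<n + m} = sum f {..<n} + sum (\<lambda>j. f (j + n)) {..<m}"
  for f :: "nat \<Rightarrow> 'a"
  by (induction m) (simp_all add: add.commute add.left_commute)

lemma pair_inv: assumes "invble (1 - w)" "invble (1 + w)"
  shows "invble (1 - w * w)" "inv_el (1 - w) + inv_el (1 + w) = 2 *\<^sub>R inv_el (1 - w * w)"
proof -
  have e: "1 - w * w = (1 + w) * (1 - w)" by (simp add: algebra_simps)
  show "invble (1 - w * w)" using e invble_mult(1)[OF assms(2,1)] by simp
  have ie: "inv_el (1 - w * w) = inv_el (1 - w) * inv_el (1 + w)" using e invble_mult(2)[OF assms(2,1)] by simp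
  have a: "inv_el (1 - w) * (1 + w) * inv_el (1 + w) = inv_el (1 - w)"
    using assms by (simp add: mult.assoc)
  have b: "inv_el (1 - w) * (1 - w) * inv_el (1 + w) = inv_el (1 + w)"
    using assms by simp
  have "inv_el (1 - w) * ((1 + w) + (1 - w)) * inv_el (1 + w) = inv_el (1 - w) * (1 + w) * inv_el (1 + w) + inv_el (1 - w) * (1 - w) * inv_el (1 + w)"
    by (simp only: distrib_left distrib_right)
  then have "inv_el (1 - w) + inv_el (1 + w) = inv_el (1 - w) * ((1 + w) + (1 - w)) * inv_el (1 + w)"
    using a b by simp
  also have "\<dots> = 2 *\<^sub>R (inv_el (1 - w) * inv_el (1 + w))"
  proof -
    have "(1 + w) + (1 - w) = 2 *\<^sub>R (1::'a)" by (simp add: scaleR_2)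
    then show ?thesis by (simp only: mult_scaleR_right mult_scaleR_left mult_1_right)
  qed
  finally show "inv_el (1 - w) + inv_el (1 + w) = 2 *\<^sub>R inv_el (1 - w * w)" using ie by simp
qed

lemma RU: "(\<forall>j<2^k. invble (1 - sc (om k ^ j) u)) \<Longrightarrow>
   invble (1 - u ^ (2^k)) \<and> (\<Sum>j<2^k. inv_el (1 - sc (om k ^ j) u)) = (2^k) *\<^sub>R inv_el (1 - u ^ (2^k))"
proof (induction k arbitrary: u)
  case 0
  then show ?case by (simp add: om_0)
next
  case (Suc k)
  define n :: nat where "n = 2^k"
  have nn: "2 ^ Suc k = n + n" by (simp add: n_def)
  have hyp: "\<And>j. j < n + n \<Longrightarrow> invble (1 - sc (om (Suc k) ^ j) u)" using Suc.prems nn by simp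
  have neg: "sc (om (Suc k) ^ (j + n)) u = - sc (om (Suc k) ^ j) u" for j
    by (simp add: power_add n_def om_half sc_minusL)
  have sq: "sc (om (Suc k) ^ j) u * sc (om (Suc k) ^ j) u = sc (om k ^ j) (u * u)" for j
  proof -
    have "om (Suc k) ^ j * om (Suc k) ^ j = om k ^ j"
      by (metis om_sq power2_eq_square power_mult_distrib)
    then show ?thesis by (simp add: sc_mul_both)
  qed
  have h1: "invble (1 - sc (om (Suc k) ^ j) u)" "invble (1 + sc (om (Suc k) ^ j) u)" if "j < n" for j
    using hyp[of j] hyp[of "j + n"] that neg[of j] by simp_all
  have ih_hyp: "\<forall>j<2^k. invble (1 - sc (om k ^ j) (u * u))"
    using pair_inv(1)[OF h1] sq by (simp add: n_def)
  have IH: "invble (1 - (u * u) ^ (2^k))"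
    "(\<Sum>j<2^k. inv_el (1 - sc (om k ^ j) (u * u))) = (2^k) *\<^sub>R inv_el (1 - (u * u) ^ (2^k))"
    using Suc.IH[OF ih_hyp] by auto
  have pw: "(u * u) ^ (2^k) = u ^ (2 ^ Suc k)"
    by (simp add: power2_eq_square[symmetric] power_mult[symmetric] mult.commute)
  have "(\<Sum>j<2^Suc k. inv_el (1 - sc (om (Suc k) ^ j) u))
      = (\<Sum>j<n. inv_el (1 - sc (om (Suc k) ^ j) u)) + (\<Sum>j<n. inv_el (1 + sc (om (Suc k) ^ j) u))"
    unfolding nn sum_split_nat by (simp add: neg)
  also have "\<dots> = (\<Sum>j<n. inv_el (1 - sc (om (Suc k) ^ j) u) + inv_el (1 + sc (om (Suc k) ^ j) u))"
    by (simp add: sum.distrib)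
  also have "\<dots> = (\<Sum>j<n. 2 *\<^sub>R inv_el (1 - sc (om k ^ j) (u * u)))"
    by (rule sum.cong) (simp_all add: pair_inv(2)[OF h1] sq)
  also have "\<dots> = 2 *\<^sub>R (2^k) *\<^sub>R inv_el (1 - u ^ (2 ^ Suc k))"
    using IH(2) pw by (simp add: n_def scaleR_sum_right[symmetric])
  finally show ?case using IH(1) pw by simp
qed

end

context cstar begin

lemma sphere_F_cont:
  assumes inv: "\<And>z. cmod z = 1 \<Longrightarrow> invble (1 - sc z b)" and nb: "norm b = 1"
  shows "continuous_on (sphere 0 1) (\<lambda>z. inv_el (1 - sc z b))"
  unfolding continuous_on_iff
proof (intro ballI allI impI)
  fix z0 :: complex and e :: real
  assume z0: "z0 \<in> sphere 0 1" and e: "0 < e"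
  let ?a = "1 - sc z0 b"
  have ia: "invble ?a" using z0 inv by simp
  define N where "N = norm (inv_el ?a) + 1"
  have N: "N \<ge> 1" "norm (inv_el ?a) \<le> N" by (simp_all add: N_def)
  define d where "d = min (1 / (2 * N)) (e / (2 * N * N))"
  have d: "d > 0" using N e by (simp add: d_def)
  show "\<exists>d>0. \<forall>x'\<in>sphere 0 1. dist x' z0 < d \<longrightarrow> dist (inv_el (1 - sc x' b)) (inv_el ?a) < e"
  proof (intro exI[of _ d] conjI ballI impI d)
    fix z assume z: "z \<in> sphere 0 1" and dz: "dist z z0 < d"
    let ?x = "1 - sc z b"
    have nxa: "norm (?x - ?a) = dist z z0"
    proof -
      have "?x - ?a = sc (z0 - z) b" by (simp add: sc_diffL)
      then show ?thesis using nb by (simp add: dist_norm norm_minus_commute)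
    qed
    have d1: "dist z z0 * N < 1/2"
    proof -
      have "dist z z0 * N < d * N" using dz N by simp
      also have "\<dots> \<le> 1 / (2 * N) * N"
        by (rule mult_right_mono) (use N in \<open>simp_all add: d_def\<close>)
      also have "\<dots> = 1/2" using N by simp
      finally show ?thesis .
    qed
    have p1: "norm (?x - ?a) * norm (inv_el ?a) \<le> dist z z0 * N"
      using nxa N by (simp add: mult_left_mono)
    then have p1': "norm (?x - ?a) * norm (inv_el ?a) < 1" using d1 by linarith
    have ix: "norm (inv_el ?x) \<le> norm (inv_el ?a) / (1 - norm (inv_el ?a) * norm (?x - ?a))"
      using invble_perturb(2)[OF ia p1'] .
    have "norm (inv_el ?x) \<le> 2 * N"
    proof -
      have q: "1 - norm (inv_el ?a) * norm (?x - ?a) \<ge> 1/2" using p1 d1 by (simp add: mult.commute)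
      have "norm (inv_el ?a) / (1 - norm (inv_el ?a) * norm (?x - ?a)) \<le> norm (inv_el ?a) / (1/2)"
        by (rule divide_left_mono[OF q]) (use q in auto)
      then show ?thesis using ix N by simp
    qed
    moreover have "norm (inv_el ?x - inv_el ?a) \<le> norm (inv_el ?x) * norm (?x - ?a) * norm (inv_el ?a)"
      using invble_perturb(3)[OF ia p1'] .
    moreover have "norm (inv_el ?x) * norm (?x - ?a) * norm (inv_el ?a) \<le> (2 * N) * dist z z0 * N"
      if "norm (inv_el ?x) \<le> 2 * N"
      using that N nxa by (intro mult_mono) simp_all
    ultimately have "norm (inv_el ?x - inv_el ?a) \<le> (2 * N) * dist z z0 * N" by linarith
    also have "\<dots> < (2 * N) * d * N" using dz N by simp
    also have "\<dots> \<le> (2 * N) * (e / (2 * N * N)) * N"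
      using N by (intro mult_right_mono mult_left_mono) (simp_all add: d_def)
    also have "\<dots> = e" using N by (simp add: field_simps)
    finally show "dist (inv_el ?x) (inv_el ?a) < e" by (simp add: dist_norm)
  qed
qed

lemma Gthm: assumes sb: "st b = b" and nb: "norm b = 1"
  shows "\<exists>z. cmod z = 1 \<and> \<not> invble (1 - sc z b)"
proof (rule ccontr)
  assume "\<not> ?thesis"
  then have inv: "\<And>z. cmod z = 1 \<Longrightarrow> invble (1 - sc z b)" by blast
  define F where "F z = inv_el (1 - sc z b)" for z
  have "compact (F ` sphere 0 1)"
    using compact_continuous_image[OF sphere_F_cont[OF inv nb] compact_sphere] by (simp add: F_def)
  then have "bounded (F ` sphere 0 1)" by (rule compact_imp_bounded)
  then obtain M where M: "M > 0" "\<And>z. cmod z = 1 \<Longrightarrow> norm (F z) \<le> M"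
    unfolding bounded_pos by auto
  have lip: "norm (F z - F z') \<le> M * M * cmod (z - z')" if "cmod z = 1" "cmod z' = 1" for z z'
  proof -
    have "F z * ((1 - sc z' b) - (1 - sc z b)) * F z' = F z * (1 - sc z' b) * F z' - F z * (1 - sc z b) * F z'"
      by (simp add: algebra_simps)
    also have "\<dots> = F z - F z'" using inv[OF that(1)] inv[OF that(2)] by (simp add: F_def mult.assoc)
    finally have e: "F z - F z' = F z * sc (z - z') b * F z'" by (simp add: sc_diffL)
    have "norm (F z - F z') \<le> norm (F z) * norm (sc (z - z') b) * norm (F z')"
      unfolding e by (rule norm_mult3)
    also have "\<dots> \<le> M * cmod (z - z') * M"
      using M(2)[OF that(1)] M(2)[OF that(2)] nb M(1)
      by (intro mult_mono) simp_all
    finally show ?thesis by (simp add: mult.commute mult.left_commute)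
  qed
  have key: "1 \<le> 2 * (M * M) * cmod (1 - om (Suc k))" for k
  proof -
    define n :: nat where "n = 2 ^ k"
    define \<eta> where "\<eta> = om (Suc k)"
    define v where "v = b ^ n"
    have nv: "norm v = 1" unfolding v_def n_def using sa_norm_pow2[OF sb, of k] nb by simp
    have eta: "cmod \<eta> = 1" using norm_om_pow[of "Suc k" 1] by (simp add: \<eta>_def)
    have etan: "\<eta> ^ n = -1" using om_half by (simp add: \<eta>_def n_def)
    have RA: "invble (1 - v)" "(\<Sum>j<n. F (om k ^ j)) = real n *\<^sub>R inv_el (1 - v)"
      using RU[of k b] inv norm_om_pow by (auto simp: F_def v_def n_def)
    have h2: "1 - sc (om k ^ j) (sc \<eta> b) = 1 - sc (om k ^ j * \<eta>) b" for j by simp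
    have pw: "(sc \<eta> b) ^ n = - v" by (simp add: sc_pow etan v_def)
    have RB: "invble (1 + v)" "(\<Sum>j<n. F (om k ^ j * \<eta>)) = real n *\<^sub>R inv_el (1 + v)"
    proof -
      have hyp: "\<forall>j<2^k. invble (1 - sc (om k ^ j) (sc \<eta> b))"
        using inv eta norm_om_pow by (simp add: norm_mult)
      from RU[OF hyp] pw show "invble (1 + v)" "(\<Sum>j<n. F (om k ^ j * \<eta>)) = real n *\<^sub>R inv_el (1 + v)"
        by (simp_all add: F_def n_def)
    qed
    have eq: "real n *\<^sub>R (inv_el (1 - v) - inv_el (1 + v)) = (\<Sum>j<n. F (om k ^ j) - F (om k ^ j * \<eta>))"
      using RA(2) RB(2) by (simp add: sum_subtractf scaleR_diff_right)
    have "real n * norm (inv_el (1 - v) - inv_el (1 + v)) \<le> (\<Sum>j<n. norm (F (om k ^ j) - F (om k ^ j * \<eta>)))"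
    proof -
      have "norm (\<Sum>j<n. F (om k ^ j) - F (om k ^ j * \<eta>)) \<le> (\<Sum>j<n. norm (F (om k ^ j) - F (om k ^ j * \<eta>)))"
        by (rule norm_sum)
      then show ?thesis by (simp only: eq[symmetric] norm_scaleR abs_of_nat)
    qed
    also have "\<dots> \<le> (\<Sum>j<n. M * M * cmod (1 - \<eta>))"
    proof (rule sum_mono)
      fix j assume "j \<in> {..<n}"
      have "norm (F (om k ^ j) - F (om k ^ j * \<eta>)) \<le> M * M * cmod (om k ^ j - om k ^ j * \<eta>)"
        using lip norm_om_pow eta by (simp add: norm_mult)
      also have "cmod (om k ^ j - om k ^ j * \<eta>) = cmod (1 - \<eta>)"
      proof -
        have "om k ^ j - om k ^ j * \<eta> = om k ^ j * (1 - \<eta>)" by (simp add: right_diff_distrib)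
        then show ?thesis using norm_om_pow[of k j] by (simp only: norm_mult)
      qed
      finally show "norm (F (om k ^ j) - F (om k ^ j * \<eta>)) \<le> M * M * cmod (1 - \<eta>)" .
    qed
    also have "\<dots> = real n * (M * M * cmod (1 - \<eta>))" by simp
    finally have D: "norm (inv_el (1 - v) - inv_el (1 + v)) \<le> M * M * cmod (1 - \<eta>)"
      using n_def by (simp add: mult_le_cancel_left_pos)
    have E: "2 *\<^sub>R v = (1 - v) * (inv_el (1 - v) - inv_el (1 + v)) * (1 + v)"
    proof -
      have "(1 - v) * (inv_el (1 - v) - inv_el (1 + v)) * (1 + v)
          = (1 - v) * inv_el (1 - v) * (1 + v) - (1 - v) * inv_el (1 + v) * (1 + v)"
        by (simp only: right_diff_distrib left_diff_distrib)
      also have "\<dots> = (1 + v) - (1 - v)" using RA(1) RB(1) by (simp add: mult.assoc inv_right_assoc)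
      also have "\<dots> = 2 *\<^sub>R v" by (simp add: scaleR_2)
      finally show ?thesis by simp
    qed
    have "2 = norm (2 *\<^sub>R v)" using nv by simp
    also have "\<dots> \<le> norm (1 - v) * norm (inv_el (1 - v) - inv_el (1 + v)) * norm (1 + v)"
      unfolding E by (rule norm_mult3)
    also have "\<dots> \<le> 2 * (M * M * cmod (1 - \<eta>)) * 2"
    proof (intro mult_mono D)
      show "norm (1 - v) \<le> 2" using norm_triangle_ineq4[of 1 v] nv by simp
      show "norm (1 + v) \<le> 2" using norm_triangle_ineq[of 1 v] nv by simp
    qed simp_all
    finally show ?thesis by (simp add: \<eta>_def)
  qed
  have lim: "(\<lambda>k. om (Suc k)) \<longlonglongrightarrow> 1"
  proof -
    have r: "(\<lambda>k. inverse ((2::real) ^ k)) \<longlonglongrightarrow> 0" by (rule LIMSEQ_inverse_realpow_zero) simp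
    have "(\<lambda>k. (2 * pi * \<i>) * complex_of_real (inverse ((2::real) ^ Suc k))) \<longlonglongrightarrow> (2 * pi * \<i>) * complex_of_real 0"
      by (intro tendsto_intros LIMSEQ_Suc[OF r])
    then have "(\<lambda>k. exp ((2 * pi * \<i>) * complex_of_real (inverse ((2::real) ^ Suc k)))) \<longlonglongrightarrow> exp 0"
      by (intro tendsto_intros) simp
    moreover have "(2 * pi * \<i>) * complex_of_real (inverse ((2::real) ^ Suc k)) = 2 * pi * \<i> / 2 ^ Suc k" for k
      by (simp only: of_real_inverse of_real_power of_real_numeral divide_inverse)
    ultimately show ?thesis unfolding om_def by simp
  qed
  have "0 < 1 / (2 * (M * M))" using M by simp
  then obtain k where "dist (om (Suc k)) 1 < 1 / (2 * (M * M))"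
    using lim unfolding tendsto_iff eventually_sequentially by blast
  then have "cmod (1 - om (Suc k)) < 1 / (2 * (M * M))" by (simp add: dist_norm norm_minus_commute)
  then have "2 * (M * M) * cmod (1 - om (Suc k)) < 1" using M by (simp add: field_simps)
  then show False using key[of k] by simp
qed

end

context cstar begin

abbreviation pos :: "'a \<Rightarrow> bool" where "pos a \<equiv> positive_in sc st UNIV a"

lemma pos_iff: "pos a \<longleftrightarrow> st a = a \<and> (\<forall>z. \<not> invble (a - sc z 1) \<longrightarrow> Im z = 0 \<and> Re z \<ge> 0)"
  unfolding positive_in_def spec_UNIV by auto

lemma posI: "st a = a \<Longrightarrow> (\<And>z. \<not> invble (a - sc z 1) \<Longrightarrow> Im z = 0 \<and> Re z \<ge> 0) \<Longrightarrow> pos a"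
  unfolding pos_iff by blast

lemma pos_sa: "pos a \<Longrightarrow> st a = a" unfolding pos_iff by blast
lemma pos_spec: "pos a \<Longrightarrow> \<not> invble (a - sc z 1) \<Longrightarrow> Im z = 0 \<and> Re z \<ge> 0"
  unfolding pos_iff by blast

lemma not_invble_zero: "\<not> invble (0::'a)"
  unfolding invble_def by simp

lemma sc_of_real1: "sc (complex_of_real r) 1 = r *\<^sub>R 1" by simp

lemma invble_neg_iff: "invble (- x) \<longleftrightarrow> invble x"
  using invble_neg[of x] invble_neg[of "- x"] by auto

lemma G_gen: assumes sb: "st b = b" and b0: "b \<noteq> 0"
  shows "\<exists>z. cmod z = norm b \<and> \<not> invble (b - sc z 1)"
proof -
  define N where "N = norm b"
  have N: "N > 0" using b0 by (simp add: N_def)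
  define b' where "b' = (1 / N) *\<^sub>R b"
  have "st b' = b'" using sb by (simp add: b'_def)
  moreover have "norm b' = 1" using N by (simp add: b'_def N_def)
  ultimately obtain w where w: "cmod w = 1" "\<not> invble (1 - sc w b')" using Gthm by blast
  have w0: "w \<noteq> 0" using w by auto
  define z where "z = complex_of_real N / w"
  have sb': "sc w b' = sc (w / complex_of_real N) b"
  proof -
    have "sc w b' = sc w (sc (complex_of_real (1 / N)) b)" by (simp only: b'_def sc_real)
    also have "\<dots> = sc (w / complex_of_real N) b" by (simp add: divide_inverse)
    finally show ?thesis .
  qed
  have wz: "(w / complex_of_real N) * z = 1" using w0 N by (simp add: z_def)
  have "sc (- (w / complex_of_real N)) (b - sc z 1) = - sc (w / complex_of_real N) b + sc ((w / complex_of_real N) * z) 1"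
    by (simp add: sc_diffR sc_minusL)
  then have "1 - sc w b' = sc (- (w / complex_of_real N)) (b - sc z 1)"
    using wz sb' by simp
  then have "\<not> invble (b - sc z 1)" using w(2) invble_sc(1)[of "b - sc z 1" "- (w / complex_of_real N)"] w0 N
    by auto
  moreover have "cmod z = norm b" using w N by (simp add: z_def norm_divide N_def)
  ultimately show ?thesis by blast
qed

lemma scalar_not_invble: "\<not> invble (r *\<^sub>R 1 - sc (complex_of_real r) 1)"
  using not_invble_zero by simp

lemma pos_le_norm: assumes "pos b" "pos (\<mu> *\<^sub>R 1 - b)" shows "norm b \<le> \<mu>"
proof (cases "b = 0")
  case True
  have "\<not> invble (\<mu> *\<^sub>R 1 - b - sc (complex_of_real \<mu>) 1)" using True not_invble_zero by simp
  then show ?thesis using pos_spec[OF assms(2)] True by fastforce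
next
  case False
  obtain z where z: "cmod z = norm b" "\<not> invble (b - sc z 1)" using G_gen[OF pos_sa[OF assms(1)] False] by blast
  have zr: "Im z = 0" "Re z \<ge> 0" using pos_spec[OF assms(1) z(2)] by auto
  have eq: "\<mu> *\<^sub>R 1 - b - sc (complex_of_real \<mu> - z) 1 = - (b - sc z 1)"
    by (simp add: sc_diffL)
  have "\<not> invble (\<mu> *\<^sub>R 1 - b - sc (complex_of_real \<mu> - z) 1)"
    unfolding eq invble_neg_iff by (rule z(2))
  then have "Re (complex_of_real \<mu> - z) \<ge> 0" using pos_spec[OF assms(2)] by blast
  moreover have "cmod z = Re z" using zr by (simp add: cmod_def)
  ultimately show ?thesis using z(1) by simp
qed

lemma norm_pos: assumes sa: "st a = a" and l: "0 \<le> l" and n: "norm (l *\<^sub>R 1 - a) \<le> l" shows "pos a"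
proof (rule posI[OF sa])
  fix z assume ni: "\<not> invble (a - sc z 1)"
  have im: "Im z = 0" using sa_spec_real[OF sa ni] .
  have "Re z \<ge> 0"
  proof (rule ccontr)
    assume "\<not> Re z \<ge> 0"
    then have x: "Re z < 0" by simp
    define x0 where "x0 = Re z"
    have zz: "z = complex_of_real x0" using im by (simp add: x0_def complex_eq_iff)
    have pl: "l - x0 > 0" using x l by (simp add: x0_def)
    define y where "y = (1 / (l - x0)) *\<^sub>R (l *\<^sub>R 1 - a)"
    have ny: "norm y < 1"
    proof -
      have "norm y = norm (l *\<^sub>R 1 - a) / (l - x0)" using pl by (simp add: y_def)
      also have "\<dots> \<le> l / (l - x0)" using n pl by (simp add: divide_right_mono)
      also have "\<dots> < 1" using pl x by (simp add: x0_def)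
      finally show ?thesis .
    qed
    have "(l - x0) *\<^sub>R y = l *\<^sub>R 1 - a" using pl by (simp add: y_def)
    then have "(l - x0) *\<^sub>R (1 - y) = (l - x0) *\<^sub>R 1 - (l *\<^sub>R 1 - a)" by (simp add: scaleR_diff_right)
    then have "a - sc z 1 = (l - x0) *\<^sub>R (1 - y)"
      by (simp add: zz algebra_simps)
    then have "invble (a - sc z 1)" using invble_scaleR[OF neumann(1)[OF ny]] pl by simp
    then show False using ni by simp
  qed
  then show "Im z = 0 \<and> Re z \<ge> 0" using im by simp
qed

lemma pos_shift: assumes "pos a" "norm a \<le> \<mu>" shows "pos (\<mu> *\<^sub>R 1 - a)"
proof (rule posI)
  show "st (\<mu> *\<^sub>R 1 - a) = \<mu> *\<^sub>R 1 - a" using pos_sa[OF assms(1)] by simp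
  fix z assume ni: "\<not> invble (\<mu> *\<^sub>R 1 - a - sc z 1)"
  have eq: "\<mu> *\<^sub>R 1 - a - sc z 1 = - (a - sc (complex_of_real \<mu> - z) 1)" by (simp add: sc_diffL)
  have ni2: "\<not> invble (a - sc (complex_of_real \<mu> - z) 1)" using ni unfolding eq invble_neg_iff .
  have s: "Im (complex_of_real \<mu> - z) = 0" "Re (complex_of_real \<mu> - z) \<ge> 0"
    using pos_spec[OF assms(1) ni2] by auto
  have "cmod (complex_of_real \<mu> - z) \<le> norm a" using spec_bound[OF ni2] .
  then have "Re (complex_of_real \<mu> - z) \<le> \<mu>" using assms(2) complex_Re_le_cmod[of "complex_of_real \<mu> - z"] by linarith
  then show "Im z = 0 \<and> Re z \<ge> 0" using s by simp
qed

lemma pos_norm: assumes "pos a" "norm a \<le> \<mu>" shows "norm (\<mu> *\<^sub>R 1 - a) \<le> \<mu>"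
proof (rule pos_le_norm)
  show "pos (\<mu> *\<^sub>R 1 - a)" by (rule pos_shift[OF assms])
  show "pos (\<mu> *\<^sub>R 1 - (\<mu> *\<^sub>R 1 - a))" using assms(1) by simp
qed

lemma pos_add: assumes "pos a" "pos b" shows "pos (a + b)"
proof (rule norm_pos)
  show "st (a + b) = a + b" using pos_sa[OF assms(1)] pos_sa[OF assms(2)] by simp
  show "0 \<le> norm a + norm b" by simp
  have "(norm a + norm b) *\<^sub>R 1 - (a + b) = (norm a *\<^sub>R 1 - a) + (norm b *\<^sub>R 1 - b)"
    by (simp add: algebra_simps)
  then have "norm ((norm a + norm b) *\<^sub>R 1 - (a + b)) \<le> norm (norm a *\<^sub>R 1 - a) + norm (norm b *\<^sub>R 1 - b)"
    by (metis norm_triangle_ineq)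
  also have "\<dots> \<le> norm a + norm b" using pos_norm[OF assms(1)] pos_norm[OF assms(2)] by (simp add: add_mono)
  finally show "norm ((norm a + norm b) *\<^sub>R 1 - (a + b)) \<le> norm a + norm b" .
qed

lemma pos_scaleR: assumes "pos a" "0 \<le> r" shows "pos (r *\<^sub>R a)"
proof (rule norm_pos)
  show "st (r *\<^sub>R a) = r *\<^sub>R a" using pos_sa[OF assms(1)] by simp
  show "0 \<le> r * norm a" using assms by simp
  have "(r * norm a) *\<^sub>R 1 - r *\<^sub>R a = r *\<^sub>R (norm a *\<^sub>R 1 - a)" by (simp add: algebra_simps)
  then have "norm ((r * norm a) *\<^sub>R 1 - r *\<^sub>R a) = r * norm (norm a *\<^sub>R 1 - a)" using assms by simp
  also have "\<dots> \<le> r * norm a" using pos_norm[OF assms(1)] assms(2) by (simp add: mult_left_mono)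
  finally show "norm ((r * norm a) *\<^sub>R 1 - r *\<^sub>R a) \<le> r * norm a" .
qed

lemma pos_zero[simp]: "pos 0"
  by (rule norm_pos[of 0 0]) simp_all
lemma pos_one[simp]: "pos 1"
  by (rule norm_pos[of 1 1]) simp_all

lemma pos_antisym: assumes "pos a" "pos (- a)" shows "a = 0"
  using pos_le_norm[of a 0] assms by simp

lemma pos_proj: assumes "st p = p" "p * p = p" shows "pos p"
proof (rule norm_pos[of p 1])
  show "st p = p" by fact
  let ?q = "1 - p"
  have sq: "st ?q * ?q = ?q" using assms by (simp add: algebra_simps)
  have "norm ?q ^ 2 = norm ?q" using cstar_id[of ?q] sq by simp
  then have "norm ?q = 0 \<or> norm ?q = 1" by (simp add: power2_eq_square)
  then show "norm (1 *\<^sub>R 1 - p) \<le> 1" by auto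
qed simp

lemma pos_sq: assumes sa: "st h = h" shows "pos (h * h)"
proof (rule posI)
  show "st (h * h) = h * h" using sa by simp
  fix z assume ni: "\<not> invble (h * h - sc z 1)"
  define s where "s = csqrt z"
  have ss: "s * s = z" using power2_csqrt[of z] by (simp add: s_def power2_eq_square)
  have "(h - sc s 1) * (h - sc (- s) 1) = h * h - h * sc (- s) 1 - sc s 1 * h + sc s 1 * sc (- s) 1"
    by (simp add: algebra_simps)
  also have "\<dots> = h * h - sc z 1"
    by (simp add: sc_mul_1L sc_mul_1R sc_mul_both sc_minusL ss)
  finally have e: "h * h - sc z 1 = (h - sc s 1) * (h - sc (- s) 1)" by simp
  have "Im s = 0"
  proof (rule ccontr)
    assume "Im s \<noteq> 0"
    then have "invble (h - sc s 1)" "invble (h - sc (- s) 1)" using realness[OF sa] by auto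
    then have "invble (h * h - sc z 1)" using e invble_mult(1) by simp
    then show False using ni by simp
  qed
  then have "z = complex_of_real ((Re s)^2)" using ss by (simp add: complex_eq_iff power2_eq_square)
  then show "Im z = 0 \<and> Re z \<ge> 0" by simp
qed

lemma pos_orth: assumes su: "st u = u" and sv: "st v = v" and uv: "u * v = 0" and vu: "v * u = 0"
  and p: "pos (u + v)" shows "pos u"
proof (rule posI[OF su])
  fix z assume ni: "\<not> invble (u - sc z 1)"
  show "Im z = 0 \<and> Re z \<ge> 0"
  proof (cases "z = 0")
    case True then show ?thesis by simp
  next
    case False
    have "\<not> invble (u + v - sc z 1)"
    proof
      assume i: "invble (u + v - sc z 1)"
      have e1: "(u - sc z 1) * (v - sc z 1) = - sc z u - sc z v + sc (z * z) 1"
      proof -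
        have "(u - sc z 1) * (v - sc z 1) = u * v - u * sc z 1 - sc z 1 * v + sc z 1 * sc z 1"
          by (simp add: algebra_simps)
        then show ?thesis by (simp add: uv sc_mul_1L sc_mul_1R sc_mul_both)
      qed
      have e2: "(v - sc z 1) * (u - sc z 1) = - sc z u - sc z v + sc (z * z) 1"
      proof -
        have "(v - sc z 1) * (u - sc z 1) = v * u - v * sc z 1 - sc z 1 * u + sc z 1 * sc z 1"
          by (simp add: algebra_simps)
        then show ?thesis by (simp add: vu sc_mul_1L sc_mul_1R sc_mul_both)
      qed
      have e: "(u - sc z 1) * (v - sc z 1) = sc (- z) (u + v - sc z 1)"
        unfolding e1 by (simp add: sc_diffR sc_addR sc_minusL)
      have c: "(u - sc z 1) * (v - sc z 1) = (v - sc z 1) * (u - sc z 1)"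
        using e1 e2 by simp
      have "invble ((u - sc z 1) * (v - sc z 1))" using e invble_sc(1)[OF i, of "-z"] False by simp
      then show False using invble_comm_factor[OF c] ni by simp
    qed
    then show ?thesis using pos_spec[OF p] by blast
  qed
qed

end

definition cf :: "nat \<Rightarrow> real" where "cf n = ((1/2::real) gchoose n) * (-1) ^ n"

lemma cf_0[simp]: "cf 0 = 1" by (simp add: cf_def)

lemma gchoose_nonneg_half: "0 \<le> ((real m - 1/2) gchoose m)"
proof -
  have "((real m - 1/2) gchoose m) = pochhammer (real m - 1/2 - real m + 1) m / fact m"
    by (rule gbinomial_pochhammer')
  also have "\<dots> = pochhammer (1/2) m / fact m" by simp
  finally show ?thesis using pochhammer_pos[of "1/2::real" m] by simp
qed

lemma cf_partial: "(\<Sum>k\<le>m. cf k) = ((real m - 1/2) gchoose m)"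
proof -
  have "(\<Sum>k\<le>m. cf k) = (- 1) ^ m * ((1/2::real) - 1 gchoose m)"
    unfolding cf_def by (rule gbinomial_sum_lower_neg)
  also have "(1/2::real) - 1 = - (1/2)" by simp
  also have "(- (1/2::real)) gchoose m = (-1)^m * ((1/2 + real m - 1) gchoose m)"
    by (rule gbinomial_minus)
  also have "(1/2 + real m - 1) = real m - 1/2" by simp
  finally show ?thesis by (simp flip: power_mult_distrib)
qed

lemma cf_partial_nonneg: "0 \<le> (\<Sum>k\<le>m. cf k)"
  using cf_partial gchoose_nonneg_half by simp

lemma cf_neg: assumes "n \<ge> 1" shows "cf n \<le> 0"
proof -
  obtain m where n: "n = Suc m" using assms by (cases n) auto
  have "((1/2::real) gchoose Suc m) = ((1/2) / real (Suc m)) * ((1/2 - 1) gchoose m)"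
    using gbinomial_absorption'[of "Suc m" "1/2::real"] by simp
  also have "(1/2::real) - 1 = - (1/2)" by simp
  also have "(- (1/2::real)) gchoose m = (-1)^m * ((1/2 + real m - 1) gchoose m)"
    by (rule gbinomial_minus)
  also have "(1/2 + real m - 1) = real m - 1/2" by simp
  finally have e: "cf n = - (((1/2) / real (Suc m)) * ((real m - 1/2) gchoose m))"
    unfolding cf_def n by (simp flip: power_mult_distrib)
  show ?thesis unfolding e using gchoose_nonneg_half[of m] by simp
qed

lemma cf_tail_sum: "(\<Sum>k<m. \<bar>cf (Suc k)\<bar>) = 1 - (\<Sum>k\<le>m. cf k)"
proof (induction m)
  case 0 then show ?case by simp
next
  case (Suc m)
  have "\<bar>cf (Suc m)\<bar> = - cf (Suc m)" using cf_neg[of "Suc m"] by simp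
  then show ?case using Suc by simp
qed

lemma cf_tail_bound: "(\<Sum>k<m. \<bar>cf (Suc k)\<bar>) \<le> 1"
  using cf_tail_sum[of m] cf_partial_nonneg[of m] by simp

lemma cf_tail_summable: "summable (\<lambda>k. \<bar>cf (Suc k)\<bar>)"
  by (rule summableI_nonneg_bounded[where x=1]) (simp_all add: cf_tail_bound)

lemma cf_summable: "summable (\<lambda>k. \<bar>cf k\<bar>)"
  by (subst summable_Suc_iff[symmetric]) (rule cf_tail_summable)

lemma cf_tail_suminf: "(\<Sum>k. \<bar>cf (Suc k)\<bar>) \<le> 1"
  by (rule suminf_le_const[OF cf_tail_summable cf_tail_bound])

lemma cf_conv: "(\<Sum>i\<le>n. cf i * cf (n - i)) = ((1::real) gchoose n) * (-1)^n"
proof -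
  have "(\<Sum>i\<le>n. cf i * cf (n - i)) = (\<Sum>i=0..n. ((1/2::real) gchoose i) * ((1/2) gchoose (n - i)) * (-1)^n)"
    unfolding cf_def atMost_atLeast0
  proof (rule sum.cong)
    fix i assume "i \<in> {0..n}"
    then have e: "(-1::real)^i * (-1)^(n-i) = (-1)^n" by (simp flip: power_add)
    have "((1::real) / 2 gchoose i) * (- 1) ^ i * ((1 / 2 gchoose (n - i)) * (- 1) ^ (n - i)) =
       ((1 / 2 gchoose i) * (1 / 2 gchoose (n - i))) * ((-1)^i * (- 1) ^ (n - i))"
      by (simp only: mult_ac)
    then show "((1::real) / 2 gchoose i) * (- 1) ^ i * ((1 / 2 gchoose (n - i)) * (- 1) ^ (n - i)) =
       (1 / 2 gchoose i) * (1 / 2 gchoose (n - i)) * (- 1) ^ n"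
      by (simp only: e)
  qed simp
  also have "\<dots> = (\<Sum>i=0..n. ((1/2::real) gchoose i) * ((1/2) gchoose (n - i))) * (-1)^n"
    by (simp add: sum_distrib_right)
  also have "\<dots> = ((1/2 + 1/2::real) gchoose n) * (-1)^n" by (simp only: gbinomial_Vandermonde)
  finally show ?thesis by simp
qed

lemma one_gchoose: "n \<ge> 2 \<Longrightarrow> ((1::real) gchoose n) = 0"
proof -
  assume n: "n \<ge> 2"
  have "(real 1 gchoose n) = real (1 choose n)" by (rule binomial_gbinomial[symmetric])
  also have "\<dots> = 0" using n by (simp add: binomial_eq_0)
  finally show ?thesis by simp
qed

context cstar begin

definition sq :: "'a \<Rightarrow> 'a" where "sq x = (\<Sum>n. cf n *\<^sub>R x ^ n)"

lemma sq_summable: fixes x :: 'a assumes "norm x \<le> 1" shows "summable (\<lambda>n. norm (cf n *\<^sub>R x ^ n))"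
proof (rule summable_comparison_test[OF _ cf_summable])
  show "\<exists>N. \<forall>n\<ge>N. norm (norm (cf n *\<^sub>R x ^ n)) \<le> \<bar>cf n\<bar>"
  proof (intro exI[of _ 0] allI impI)
    fix n :: nat
    have "norm (x ^ n) \<le> 1" using norm_power_ineq[of x n] assms
      by (meson order_trans power_le_one norm_ge_zero)
    then show "norm (norm (cf n *\<^sub>R x ^ n)) \<le> \<bar>cf n\<bar>"
      by (simp add: mult_left_le)
  qed
qed

lemma sq_sq: assumes "norm x \<le> 1" shows "sq x * sq x = 1 - x"
proof -
  have "sq x * sq x = (\<Sum>n. \<Sum>i\<le>n. (cf i *\<^sub>R x ^ i) * (cf (n - i) *\<^sub>R x ^ (n - i)))"
    unfolding sq_def by (rule Cauchy_product[OF sq_summable[OF assms] sq_summable[OF assms]])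
  also have "\<dots> = (\<Sum>n. (((1::real) gchoose n) * (-1)^n) *\<^sub>R x ^ n)"
  proof (rule suminf_cong)
    fix n
    have "(\<Sum>i\<le>n. (cf i *\<^sub>R x ^ i) * (cf (n - i) *\<^sub>R x ^ (n - i))) = (\<Sum>i\<le>n. (cf i * cf (n - i)) *\<^sub>R x ^ n)"
    proof (rule sum.cong)
      fix i assume "i \<in> {..n}"
      then have "x ^ i * x ^ (n - i) = x ^ n" by (simp flip: power_add)
      then show "(cf i *\<^sub>R x ^ i) * (cf (n - i) *\<^sub>R x ^ (n - i)) = (cf i * cf (n - i)) *\<^sub>R x ^ n"
        by simp
    qed simp
    also have "\<dots> = (\<Sum>i\<le>n. cf i * cf (n - i)) *\<^sub>R x ^ n" by (simp add: scaleR_sum_left)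
    finally show "(\<Sum>i\<le>n. (cf i *\<^sub>R x ^ i) * (cf (n - i) *\<^sub>R x ^ (n - i))) = (((1::real) gchoose n) * (-1)^n) *\<^sub>R x ^ n"
      by (simp add: cf_conv)
  qed
  also have "\<dots> = (\<Sum>n\<in>{0,1}. (((1::real) gchoose n) * (-1)^n) *\<^sub>R x ^ n)"
    by (rule suminf_finite) (auto simp: one_gchoose)
  also have "\<dots> = 1 - x" by simp
  finally show ?thesis .
qed

lemma sq_norm: assumes "norm x \<le> 1" shows "norm (1 - sq x) \<le> 1"
proof -
  have s: "summable (\<lambda>n. cf n *\<^sub>R x ^ n)" using summable_norm_cancel[OF sq_summable[OF assms]] .
  have st: "summable (\<lambda>n. norm (cf (Suc n) *\<^sub>R x ^ Suc n))"
    using summable_ignore_initial_segment[OF sq_summable[OF assms], of 1] by simp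
  have "(\<Sum>n. cf (Suc n) *\<^sub>R x ^ Suc n) = sq x - 1"
    using suminf_split_head[OF s] by (simp add: sq_def)
  then have "1 - sq x = - (\<Sum>n. cf (Suc n) *\<^sub>R x ^ Suc n)" by simp
  then have "norm (1 - sq x) = norm (\<Sum>n. cf (Suc n) *\<^sub>R x ^ Suc n)" by simp
  also have "\<dots> \<le> (\<Sum>n. norm (cf (Suc n) *\<^sub>R x ^ Suc n))" by (rule summable_norm[OF st])
  also have "\<dots> \<le> (\<Sum>n. \<bar>cf (Suc n)\<bar>)"
  proof (rule suminf_le[OF _ st cf_tail_summable])
    fix n
    have "norm (x ^ Suc n) \<le> 1" using norm_power_ineq[of x "Suc n"] assms
      by (meson order_trans power_le_one norm_ge_zero)
    then show "norm (cf (Suc n) *\<^sub>R x ^ Suc n) \<le> \<bar>cf (Suc n)\<bar>" by (simp add: mult_left_le)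
  qed
  also have "\<dots> \<le> 1" by (rule cf_tail_suminf)
  finally show ?thesis .
qed

lemma sq_sa: assumes "norm x \<le> 1" "st x = x" shows "st (sq x) = sq x"
proof -
  have s: "summable (\<lambda>n. cf n *\<^sub>R x ^ n)" using summable_norm_cancel[OF sq_summable[OF assms(1)]] .
  show ?thesis unfolding sq_def st_suminf[OF s] using assms(2) by (simp add: st_pow)
qed

lemma sq_comm: assumes "norm x \<le> 1" "y * x = x * y" shows "y * sq x = sq x * y"
proof -
  have s: "summable (\<lambda>n. cf n *\<^sub>R x ^ n)" using summable_norm_cancel[OF sq_summable[OF assms(1)]] .
  have c: "y * x ^ n = x ^ n * y" for n
    by (induction n) (simp_all add: mult.assoc[symmetric] assms(2), simp add: mult.assoc)
  show ?thesis unfolding sq_def suminf_mult[OF s, symmetric] suminf_mult2[OF s]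
    by (simp add: c)
qed

lemma pos_sq_elem: assumes "norm x \<le> 1" "st x = x" shows "pos (sq x)"
  by (rule norm_pos[of _ 1]) (simp_all add: sq_sa[OF assms] sq_norm[OF assms(1)])

definition psq :: "'a \<Rightarrow> 'a" where
  "psq a = (if a = 0 then 0 else sqrt (norm a) *\<^sub>R sq (1 - (1 / norm a) *\<^sub>R a))"

lemma psq_props: assumes p: "pos a"
  shows "psq a * psq a = a" "st (psq a) = psq a" "pos (psq a)"
    "\<And>y. y * a = a * y \<Longrightarrow> y * psq a = psq a * y"
proof -
  have all: "psq a * psq a = a \<and> st (psq a) = psq a \<and> pos (psq a) \<and> (\<forall>y. y * a = a * y \<longrightarrow> y * psq a = psq a * y)"
  proof (cases "a = 0")
    case True then show ?thesis by (simp add: psq_def)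
  next
    case False
    define N where "N = norm a"
    have N: "N > 0" using False by (simp add: N_def)
    define x where "x = 1 - (1 / N) *\<^sub>R a"
    have sx: "st x = x" using pos_sa[OF p] by (simp add: x_def)
    have "x = (1 / N) *\<^sub>R (N *\<^sub>R 1 - a)" using N by (simp add: x_def algebra_simps)
    then have "norm x = (1 / N) * norm (N *\<^sub>R 1 - a)" using N by simp
    also have "\<dots> \<le> (1 / N) * N" using pos_norm[OF p, of N] N by (simp add: N_def)
    finally have nx: "norm x \<le> 1" using N by simp
    have ps: "psq a = sqrt N *\<^sub>R sq x" using False by (simp add: psq_def N_def x_def)
    have "psq a * psq a = N *\<^sub>R (sq x * sq x)" using N by (simp add: ps)
    also have "\<dots> = N *\<^sub>R (1 - x)" by (simp only: sq_sq[OF nx])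
    also have "\<dots> = a" using N by (simp add: x_def algebra_simps)
    finally have 1: "psq a * psq a = a" .
    have 2: "st (psq a) = psq a" by (simp add: ps sq_sa[OF nx sx])
    have 3: "pos (psq a)" unfolding ps by (rule pos_scaleR[OF pos_sq_elem[OF nx sx]]) (use N in simp)
    have 4: "y * psq a = psq a * y" if "y * a = a * y" for y
    proof -
      have "y * x = x * y" using that by (simp add: x_def algebra_simps)
      then show ?thesis using sq_comm[OF nx] by (simp add: ps)
    qed
    show ?thesis using 1 2 3 4 by blast
  qed
  then show "psq a * psq a = a" "st (psq a) = psq a" "pos (psq a)"
    "\<And>y. y * a = a * y \<Longrightarrow> y * psq a = psq a * y" by blast+
qed

end

context cstar begin

lemma jacobson: assumes i: "invble (1 - a * b)" shows "invble (1 - b * a)"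
proof -
  let ?w = "inv_el (1 - a * b)"
  have "(1 - b * a) * (1 + b * ?w * a) = 1 - b * a + b * ((1 - a * b) * ?w) * a"
    by (simp add: algebra_simps)
  also have "\<dots> = 1" using i by simp
  finally have l: "(1 - b * a) * (1 + b * ?w * a) = 1" .
  have "(1 + b * ?w * a) * (1 - b * a) = 1 - b * a + b * (?w * (1 - a * b)) * a"
    by (simp add: algebra_simps)
  also have "\<dots> = 1" using i by simp
  finally have r: "(1 + b * ?w * a) * (1 - b * a) = 1" .
  show ?thesis by (rule invble_I[OF l r])
qed

lemma sc_helper: assumes "z \<noteq> 0" shows "sc (- z) (1 - sc (- 1 / z) u) = - u - sc z 1"
proof -
  have "sc (- z) (1 - sc (- 1 / z) u) = sc (- z) 1 - sc ((- z) * (- 1 / z)) u"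
    by (simp only: sc_diffR sc_assoc)
  also have "(- z) * (- 1 / z) = 1" using assms by simp
  finally show ?thesis by (simp add: sc_minusL)
qed

lemma JdJd: "(J * d) * (J * d) = - (d * d)"
proof -
  have "(J * d) * (J * d) = J * (d * J) * d" by (simp add: mult.assoc)
  also have "\<dots> = (J * J) * (d * d)" by (simp add: J_comm[of d, symmetric] mult.assoc)
  finally show ?thesis by (simp add: JJ)
qed

lemma neg_star_zero: assumes p: "pos (- (st y * y))" shows "y = 0"
proof -
  have p2: "pos (- (y * st y))"
  proof (rule posI)
    show "st (- (y * st y)) = - (y * st y)" by simp
    fix z assume ni: "\<not> invble (- (y * st y) - sc z 1)"
    show "Im z = 0 \<and> Re z \<ge> 0"
    proof (cases "z = 0")
      case True then show ?thesis by simp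
    next
      case False
      let ?a = "sc (- 1 / z) (st y)"
      have e1: "- (st y * y) - sc z 1 = sc (- z) (1 - ?a * y)"
        using sc_helper[OF False, of "st y * y"] by (simp add: sc_mulL)
      have e2: "- (y * st y) - sc z 1 = sc (- z) (1 - y * ?a)"
        using sc_helper[OF False, of "y * st y"] by (simp add: sc_mulR)
      have "\<not> invble (- (st y * y) - sc z 1)"
      proof
        assume i: "invble (- (st y * y) - sc z 1)"
        have "invble (sc (- 1 / z) (- (st y * y) - sc z 1))" using invble_sc(1)[OF i] False by simp
        then have "invble (1 - ?a * y)" unfolding e1 using False by simp
        then have "invble (1 - y * ?a)" by (rule jacobson)
        then have "invble (- (y * st y) - sc z 1)" unfolding e2 using invble_sc(1) False by simp
        then show False using ni by simp
      qed
      then show ?thesis using pos_spec[OF p] by blast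
    qed
  qed
  define P where "P = (1/2) *\<^sub>R (y + st y)"
  define Q where "Q = (1/2) *\<^sub>R (J * (st y - y))"
  have sP: "st P = P" by (simp add: P_def add.commute)
  have sQ: "st Q = Q" by (simp add: Q_def J_comm algebra_simps)
  have QQ: "Q * Q = - ((1/4) *\<^sub>R ((st y - y) * (st y - y)))"
    unfolding Q_def by (simp add: JdJd)
  let ?S = "y + st y" and ?D = "st y - y"
  have SD: "?S * ?S - ?D * ?D = 2 *\<^sub>R (y * st y + st y * y)" by (simp add: algebra_simps scaleR_2)
  have PP: "2 *\<^sub>R (P * P) = (1/2) *\<^sub>R (?S * ?S)" by (simp add: P_def)
  have "2 *\<^sub>R (P * P) + 2 *\<^sub>R (Q * Q) = (1/2) *\<^sub>R (?S * ?S - ?D * ?D)"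
    unfolding PP QQ by (simp add: scaleR_diff_right)
  also have "\<dots> = y * st y + st y * y" unfolding SD by simp
  finally have "y * st y = 2 *\<^sub>R (P * P) + 2 *\<^sub>R (Q * Q) + - (st y * y)" by simp
  moreover have "pos (2 *\<^sub>R (P * P) + 2 *\<^sub>R (Q * Q) + - (st y * y))"
    by (intro pos_add pos_scaleR pos_sq sP sQ p) simp_all
  ultimately have "pos (y * st y)" by simp
  then have "y * st y = 0" using pos_antisym p2 by blast
  then have "norm y ^ 2 = 0" using cstar_id'[of y] by simp
  then show "y = 0" by simp
qed

lemma pos_star: "pos (st y * y)"
proof -
  define h where "h = st y * y"
  have sh: "st h = h" by (simp add: h_def)
  have phh: "pos (h * h)" by (rule pos_sq[OF sh])
  define a where "a = psq (h * h)"
  have aa: "a * a = h * h" and sa: "st a = a" and pa: "pos a"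
    unfolding a_def by (rule psq_props(1)[OF phh], rule psq_props(2)[OF phh], rule psq_props(3)[OF phh])
  have ha: "h * a = a * h" unfolding a_def by (rule psq_props(4)[OF phh]) (simp add: mult.assoc)
  define hp where "hp = (1/2) *\<^sub>R (a + h)"
  define hm where "hm = (1/2) *\<^sub>R (a - h)"
  have "hp * hm = (1/4) *\<^sub>R (a * a - a * h + h * a - h * h)"
    by (simp add: hp_def hm_def algebra_simps)
  then have pm: "hp * hm = 0" by (simp add: aa ha)
  have "hm * hp = (1/4) *\<^sub>R (a * a + a * h - h * a - h * h)"
    by (simp add: hp_def hm_def algebra_simps)
  then have mp: "hm * hp = 0" by (simp add: aa ha)
  have shp: "st hp = hp" by (simp add: hp_def sa sh)
  have shm: "st hm = hm" by (simp add: hm_def sa sh)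
  have apm: "hp + hm = a" by (simp add: hp_def hm_def algebra_simps scaleR_2[symmetric])
  have php: "pos hp" using pos_orth[OF shp shm pm mp] pa apm by simp
  have phm: "pos hm" using pos_orth[OF shm shp mp pm] pa apm by (simp add: add.commute)
  have hpm: "h = hp - hm" by (simp add: hp_def hm_def algebra_simps scaleR_2[symmetric])
  define e where "e = psq hm"
  have ee: "e * e = hm" and se: "st e = e" unfolding e_def by (rule psq_props(1)[OF phm], rule psq_props(2)[OF phm])
  define w where "w = y * hm"
  have "st w * w = hm * h * hm" by (simp add: w_def shm h_def mult.assoc)
  also have "\<dots> = hm * hp * hm - hm * hm * hm" by (simp add: hpm algebra_simps)
  also have "\<dots> = - (hm * hm * hm)" by (simp add: mp)
  finally have sww: "st w * w = - (hm * hm * hm)" .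
  have "hm * hm * hm = (e * e * e) * (e * e * e)" by (simp add: ee[symmetric] mult.assoc)
  moreover have "st (e * e * e) = e * e * e" by (simp add: se mult.assoc)
  ultimately have "pos (hm * hm * hm)" using pos_sq by simp
  then have "pos (- (st w * w))" using sww by simp
  then have "w = 0" by (rule neg_star_zero)
  then have "hm * hm * hm = 0" using sww by simp
  then have "hm ^ (2^2) = 0" by (simp add: numeral_eq_Suc mult.assoc)
  then have "norm hm ^ (2^2) = 0" using sa_norm_pow2[OF shm, of 2] by simp
  then have "hm = 0" by simp
  then have "h = hp" using hpm by simp
  then show ?thesis using php h_def by simp
qed

lemma pos_conj: assumes p: "pos a" shows "pos (st x * a * x)"
proof -
  define e where "e = psq a"
  have ee: "e * e = a" and se: "st e = e" unfolding e_def by (rule psq_props(1)[OF p], rule psq_props(2)[OF p])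
  have eq: "st x * a * x = st (e * x) * (e * x)" by (simp add: se ee[symmetric] mult.assoc)
  show ?thesis by (subst eq) (rule pos_star)
qed

lemma pos_inv: assumes p: "pos a" and i: "invble a" shows "pos (inv_el a)"
proof -
  have "inv_el a = st (inv_el a) * a * inv_el a"
    using sa_inv[OF i pos_sa[OF p]] i by simp
  then show ?thesis using pos_conj[OF p, of "inv_el a"] by simp
qed

end

context cstar begin

lemma small_invble: assumes "invble a" "cmod w * norm (inv_el a) < 1" shows "invble (a - sc w 1)"
  using invble_perturb(1)[OF assms(1)] assms(2) by simp

lemma inv_nonzero: "invble a \<Longrightarrow> inv_el a \<noteq> 0"
  using inv_right[of a] by force

lemma pos_lower: assumes p: "pos a" and i: "invble a" shows "\<exists>\<epsilon>>0. pos (a - \<epsilon> *\<^sub>R 1)"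
proof -
  define \<epsilon> where "\<epsilon> = 1 / norm (inv_el a)"
  have n0: "norm (inv_el a) > 0" using inv_nonzero[OF i] by simp
  have e0: "\<epsilon> > 0" using n0 by (simp add: \<epsilon>_def)
  have "pos (a - \<epsilon> *\<^sub>R 1)"
  proof (rule posI)
    show "st (a - \<epsilon> *\<^sub>R 1) = a - \<epsilon> *\<^sub>R 1" using pos_sa[OF p] by simp
    fix z assume ni: "\<not> invble (a - \<epsilon> *\<^sub>R 1 - sc z 1)"
    let ?w = "z + complex_of_real \<epsilon>"
    have eq: "a - \<epsilon> *\<^sub>R 1 - sc z 1 = a - sc ?w 1" by (simp add: sc_addL)
    have ni2: "\<not> invble (a - sc ?w 1)" using ni eq by simp
    have s: "Im ?w = 0" "Re ?w \<ge> 0" using pos_spec[OF p ni2] by auto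
    have "\<not> cmod ?w * norm (inv_el a) < 1" using small_invble[OF i] ni2 by blast
    then have "cmod ?w \<ge> \<epsilon>" using n0 by (simp add: \<epsilon>_def field_simps)
    moreover have "cmod ?w = Re ?w" using s by (simp add: cmod_def)
    ultimately show "Im z = 0 \<and> Re z \<ge> 0" using s by simp
  qed
  then show ?thesis using e0 by blast
qed

lemma pos_margin_invble: assumes "pos (a - \<epsilon> *\<^sub>R 1)" "\<epsilon> > 0" shows "invble a"
proof (rule ccontr)
  assume "\<not> invble a"
  then have "\<not> invble (a - \<epsilon> *\<^sub>R 1 - sc (complex_of_real (- \<epsilon>)) 1)" by (simp add: sc_minusL)
  then have "Re (complex_of_real (- \<epsilon>)) \<ge> 0" using pos_spec[OF assms(1)] by blast
  then show False using assms(2) by simp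
qed

lemma psq_unique: assumes p: "pos c" and i: "invble c" and py: "pos y" and yy: "y * y = c"
  shows "y = psq c"
proof -
  define d where "d = psq c"
  have dd: "d * d = c" and pd: "pos d" unfolding d_def by (rule psq_props(1)[OF p], rule psq_props(3)[OF p])
  have yd: "y * d = d * y" unfolding d_def by (rule psq_props(4)[OF p]) (simp add: yy[symmetric] mult.assoc)
  have iy: "invble y"
  proof (rule invble_left_right(1))
    show "y * (y * inv_el c) = 1" using i by (simp add: mult.assoc[symmetric] yy)
    show "(inv_el c * y) * y = 1" using i by (simp add: mult.assoc yy)
  qed
  obtain \<epsilon> where e: "\<epsilon> > 0" "pos (y - \<epsilon> *\<^sub>R 1)" using pos_lower[OF py iy] by blast
  have "pos ((y - \<epsilon> *\<^sub>R 1) + d)" by (rule pos_add[OF e(2) pd])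
  then have "pos ((y + d) - \<epsilon> *\<^sub>R 1)" by (simp add: algebra_simps)
  then have iyd: "invble (y + d)" using pos_margin_invble e(1) by blast
  have "(y + d) * (y - d) = y * y - y * d + d * y - d * d" by (simp add: algebra_simps)
  also have "\<dots> = 0" by (simp add: yy dd yd)
  finally have "inv_el (y + d) * ((y + d) * (y - d)) = 0" by simp
  then have "y - d = 0" using iyd by (simp add: inv_left_assoc)
  then show ?thesis by (simp add: d_def)
qed

lemma psqrt_eq: assumes "pos c" "invble c" shows "psqrt sc st c = psq c"
  unfolding psqrt_def
proof (rule the_equality)
  show "pos (psq c) \<and> psq c * psq c = c" using psq_props(1,3)[OF assms(1)] by (intro conjI)
  show "\<And>y. pos y \<and> y * y = c \<Longrightarrow> y = psq c" using psq_unique[OF assms] by blast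
qed

lemma inv_ge_one: assumes p: "pos c" and i: "invble c" and q: "pos (c - 1)" shows "pos (1 - inv_el c)"
proof -
  have pi: "pos (inv_el c)" by (rule pos_inv[OF p i])
  define e where "e = psq (inv_el c)"
  have ee: "e * e = inv_el c" and se: "st e = e" unfolding e_def by (rule psq_props(1)[OF pi], rule psq_props(2)[OF pi])
  have ce: "c * e = e * c" unfolding e_def by (rule psq_props(4)[OF pi]) (use i in simp)
  have x: "e * c * e = c * (e * e)" by (simp add: ce[symmetric] mult.assoc)
  have "st e * (c - 1) * e = e * c * e - e * e" by (simp add: se algebra_simps)
  also have "\<dots> = 1 - inv_el c" using i by (simp add: x ee)
  finally show ?thesis using pos_conj[OF q, of e] by simp
qed

lemma inv_le_one: assumes p: "pos c" and i: "invble c" and q: "pos (1 - c)" shows "pos (inv_el c - 1)"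
proof -
  have pi: "pos (inv_el c)" by (rule pos_inv[OF p i])
  define e where "e = psq (inv_el c)"
  have ee: "e * e = inv_el c" and se: "st e = e" unfolding e_def by (rule psq_props(1)[OF pi], rule psq_props(2)[OF pi])
  have ce: "c * e = e * c" unfolding e_def by (rule psq_props(4)[OF pi]) (use i in simp)
  have x: "e * c * e = c * (e * e)" by (simp add: ce[symmetric] mult.assoc)
  have "st e * (1 - c) * e = e * e - e * c * e" by (simp add: se algebra_simps)
  also have "\<dots> = inv_el c - 1" using i by (simp add: x ee)
  finally show ?thesis using pos_conj[OF q, of e] by simp
qed

lemma inv_antimono: assumes pa: "pos a" and ia: "invble a" and ib: "invble b" and pba: "pos (b - a)"
  shows "pos (inv_el a - inv_el b)"
proof -
  define d where "d = psq a"
  have dd: "d * d = a" and sd: "st d = d" unfolding d_def by (rule psq_props(1)[OF pa], rule psq_props(2)[OF pa])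
  have id: "invble d"
  proof (rule invble_left_right(1))
    show "d * (d * inv_el a) = 1" using ia by (simp add: mult.assoc[symmetric] dd)
    show "(inv_el a * d) * d = 1" using ia by (simp add: mult.assoc dd)
  qed
  define di where "di = inv_el d"
  have sdi: "st di = di" unfolding di_def by (rule sa_inv[OF id sd])
  have idi: "invble di" unfolding di_def by (rule invble_inv[OF id])
  have didi: "di * di = inv_el a"
    unfolding di_def dd[symmetric] by (rule invble_mult(2)[OF id id, symmetric])
  define b' where "b' = di * b * di"
  have "st di * (b - a) * di = b' - di * (d * d) * di" by (simp add: sdi b'_def algebra_simps dd)
  also have "di * (d * d) * di = 1" using id by (simp add: di_def mult.assoc)
  finally have q: "pos (b' - 1)" using pos_conj[OF pba, of di] by simp
  have pb': "pos b'" using pos_add[OF q pos_one] by simp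
  have ib': "invble b'" unfolding b'_def by (intro invble_mult(1) idi ib)
  have ib'e: "inv_el b' = d * inv_el b * d"
    unfolding b'_def using invble_mult(2)[OF invble_mult(1)[OF idi ib] idi] invble_mult(2)[OF idi ib] id
    by (simp add: di_def inv_inv mult.assoc)
  have r: "pos (1 - inv_el b')" by (rule inv_ge_one[OF pb' ib' q])
  have "st di * (1 - inv_el b') * di = di * di - (di * d) * inv_el b * (d * di)"
    by (simp add: sdi ib'e algebra_simps mult.assoc)
  also have "\<dots> = inv_el a - inv_el b"
  proof -
    have "di * d = 1" "d * di = 1" using id by (simp_all add: di_def)
    then show ?thesis by (simp add: didi)
  qed
  finally show ?thesis using pos_conj[OF r, of di] by simp
qed

text \<open>Subalgebras\<close>

lemma sub_mult: "cstar_subalg sc st B \<Longrightarrow> x \<in> B \<Longrightarrow> y \<in> B \<Longrightarrow> x * y \<in> B"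
  unfolding cstar_subalg_def by blast
lemma sub_add: "cstar_subalg sc st B \<Longrightarrow> x \<in> B \<Longrightarrow> y \<in> B \<Longrightarrow> x + y \<in> B"
  unfolding cstar_subalg_def by blast
lemma sub_sc: "cstar_subalg sc st B \<Longrightarrow> x \<in> B \<Longrightarrow> sc a x \<in> B"
  unfolding cstar_subalg_def by blast
lemma sub_st: "cstar_subalg sc st B \<Longrightarrow> x \<in> B \<Longrightarrow> st x \<in> B"
  unfolding cstar_subalg_def by blast
lemma sub_one: "cstar_subalg sc st B \<Longrightarrow> 1 \<in> B"
  unfolding cstar_subalg_def by blast
lemma sub_scaleR: "cstar_subalg sc st B \<Longrightarrow> x \<in> B \<Longrightarrow> r *\<^sub>R x \<in> B"
  using sub_sc[of B x "complex_of_real r"] by simp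
lemma sub_diff: "cstar_subalg sc st B \<Longrightarrow> x \<in> B \<Longrightarrow> y \<in> B \<Longrightarrow> x - y \<in> B"
  using sub_add[of B x "(-1) *\<^sub>R y"] sub_scaleR[of B y "-1"] by simp
lemma sub_sc1: "cstar_subalg sc st B \<Longrightarrow> sc a 1 \<in> B"
  using sub_sc sub_one by blast

lemma permanence: assumes B: "cstar_subalg sc st B" and x: "x \<in> B" and i: "invble x"
  shows "inv_el x \<in> B"
proof -
  define a where "a = st x * x"
  have aB: "a \<in> B" unfolding a_def by (intro sub_mult sub_st B x)
  have pa: "pos a" unfolding a_def by (rule pos_star)
  have ia: "invble a" unfolding a_def by (intro invble_mult(1) invble_st(1) i)
  obtain \<epsilon> where e: "\<epsilon> > 0" "pos (a - \<epsilon> *\<^sub>R 1)" using pos_lower[OF pa ia] by blast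
  define l where "l = norm a"
  have a0: "a \<noteq> 0" using ia not_invble_zero by auto
  have l0: "l > 0" using a0 by (simp add: l_def)
  define b where "b = l *\<^sub>R 1 - a"
  have pb: "pos b" unfolding b_def by (rule pos_shift[OF pa]) (simp add: l_def)
  have "pos ((l - \<epsilon>) *\<^sub>R 1 - b)" using e(2) by (simp add: b_def algebra_simps)
  then have nb: "norm b \<le> l - \<epsilon>" by (rule pos_le_norm[OF pb])
  define y where "y = (1 / l) *\<^sub>R b"
  have ny: "norm y < 1"
  proof -
    have "norm y = norm b / l" using l0 by (simp add: y_def)
    also have "\<dots> \<le> (l - \<epsilon>) / l" using nb l0 by (simp add: divide_right_mono)
    also have "\<dots> < 1" using l0 e(1) by simp
    finally show ?thesis .
  qed
  have yB: "y \<in> B" unfolding y_def b_def by (intro sub_scaleR sub_diff sub_one aB B)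
  have ae: "a = l *\<^sub>R (1 - y)" using l0 by (simp add: y_def b_def algebra_simps)
  have iy: "invble (1 - y)" by (rule neumann(1)[OF ny])
  have ce: "complex_of_real (1/l) = 1 / complex_of_real l" by simp
  have "inv_el a = sc (1 / complex_of_real l) (inv_el (1 - y))"
    using invble_sc(2)[OF iy, of "complex_of_real l"] l0 ae by simp
  also have "\<dots> = (1 / l) *\<^sub>R inv_el (1 - y)" by (simp only: ce[symmetric] sc_real)
  finally have "inv_el a = (1 / l) *\<^sub>R inv_el (1 - y)" .
  then have iaB: "inv_el a \<in> B" using subalg_neumann[OF B yB ny] sub_scaleR[OF B] by simp
  have L: "(inv_el a * st x) * x = 1" using ia by (simp add: a_def mult.assoc)
  have "inv_el x = ((inv_el a * st x) * x) * inv_el x" using L by simp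
  also have "\<dots> = (inv_el a * st x) * (x * inv_el x)" by (simp only: mult.assoc)
  also have "\<dots> = inv_el a * st x" using i by simp
  finally show ?thesis using iaB by (simp add: sub_mult[OF B iaB sub_st[OF B x]])
qed

lemma pos_sub: assumes B: "cstar_subalg sc st B" and aB: "a \<in> B" and p: "pos a"
  shows "positive_in sc st B a"
  unfolding positive_in_def
proof (intro conjI ballI)
  show "a \<in> B" by fact
  show "st a = a" using pos_sa[OF p] .
  fix z assume z: "z \<in> spec_in sc B a"
  have "\<not> invble (a - sc z 1)"
  proof
    assume i: "invble (a - sc z 1)"
    have "a - sc z 1 \<in> B" by (intro sub_diff sub_sc1 B aB)
    then have "inv_el (a - sc z 1) \<in> B" using permanence[OF B _ i] by blast
    then show False using z i unfolding spec_in_def by auto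
  qed
  then show "Im z = 0" "0 \<le> Re z" using pos_spec[OF p] by auto
qed

lemma le_UNIV: "le_in sc st UNIV a b \<longleftrightarrow> st a = a \<and> st b = b \<and> pos (b - a)"
  unfolding le_in_def by simp

end

locale prob = cstar sc st for sc :: "complex \<Rightarrow> 'a::{banach, real_normed_algebra_1} \<Rightarrow> 'a" and st +
  fixes t :: 'a
  assumes hyp: "le_in sc st UNIV 1 (st t * t)"
begin

abbreviation "s \<equiv> st t * t"
abbreviation "r \<equiv> inv_el s"
abbreviation "T \<equiv> tp st t"
abbreviation "A \<equiv> st (tp st t)"
abbreviation "c \<equiv> ck st t"
abbreviation "p \<equiv> pk st t"
abbreviation "u \<equiv> uk st t"
abbreviation "v \<equiv> vk st t"

lemma ps: "pos s" by (rule pos_star)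
lemma ps1: "pos (s - 1)" using hyp unfolding le_UNIV by simp
lemma inv_s: "invble s" using pos_margin_invble[of s 1] ps1 by simp
lemma sr: "st r = r" by (rule sa_inv[OF inv_s]) simp
lemma pr: "pos r" by (rule pos_inv[OF ps inv_s])
lemma ir: "invble r" by (rule invble_inv[OF inv_s])
lemma p1r: "pos (1 - r)" by (rule inv_ge_one[OF ps inv_s ps1])
lemma T_def': "T = t * r" by (simp add: tp_def)
lemma A_def': "A = r * st t" by (simp add: tp_def sr)
lemma stA: "st A = T" by simp
lemma AT: "A * T = r"
proof -
  have "A * T = r * (s * r)" by (simp add: T_def' A_def' mult.assoc sr)
  also have "\<dots> = r" using inv_s by simp
  finally show ?thesis .
qed

lemma c_def': "c k = A ^ k * T ^ k" by (simp add: ck_def)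
lemma c0: "c 0 = 1" by (simp add: c_def')
lemma c_Suc: "c (Suc k) = A * c k * T"
  by (simp only: c_def' power_Suc[of A k] power_Suc2[of T k] mult.assoc)
lemma c_Suc2: "c (Suc k) = A ^ k * r * T ^ k"
proof -
  have "c (Suc k) = A ^ k * (A * T) * T ^ k" by (simp only: c_def' power_Suc2[of A k] power_Suc[of T k] mult.assoc)
  then show ?thesis by (simp only: AT)
qed
lemma st_powT: "st (T ^ k) = A ^ k" by (simp add: st_pow)
lemma st_powA: "st (A ^ k) = T ^ k" by (simp add: st_pow)
lemma sc_k: "st (c k) = c k" by (simp add: c_def' st_powT st_powA)
lemma pc: "pos (c k)"
proof -
  have "c k = st (T ^ k) * T ^ k" by (simp add: c_def' st_powT)
  then show ?thesis using pos_star by (simp only:)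
qed
lemma pcc: "pos (c k - c (Suc k))"
proof -
  have "c k - c (Suc k) = st (T ^ k) * (1 - r) * T ^ k"
    by (simp only: c_Suc2 st_powT) (simp add: c_def' algebra_simps)
  then show ?thesis using pos_conj[OF p1r] by (simp only:)
qed
lemma p1c: "pos (1 - c k)"
proof (induction k)
  case 0 then show ?case by (simp add: c0)
next
  case (Suc k)
  have "pos ((1 - c k) + (c k - c (Suc k)))" by (rule pos_add[OF Suc.IH pcc])
  then show ?case by simp
qed
lemma ic: "invble (c k)"
proof -
  obtain \<delta> where d: "\<delta> > 0" "pos (r - \<delta> *\<^sub>R 1)" using pos_lower[OF pr ir] by blast
  have "\<exists>\<epsilon>>0. pos (c k - \<epsilon> *\<^sub>R 1)"
  proof (induction k)
    case 0
    have "pos (c 0 - (1::real) *\<^sub>R 1)" by (simp add: c0)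
    then show ?case by (intro exI[of _ "1"]) simp
  next
    case (Suc k)
    then obtain \<epsilon> where e: "\<epsilon> > 0" "pos (c k - \<epsilon> *\<^sub>R 1)" by blast
    have "c (Suc k) - (\<epsilon> * \<delta>) *\<^sub>R 1 = st T * (c k - \<epsilon> *\<^sub>R 1) * T + \<epsilon> *\<^sub>R (r - \<delta> *\<^sub>R 1)"
      by (simp add: c_Suc algebra_simps AT)
    moreover have "pos (st T * (c k - \<epsilon> *\<^sub>R 1) * T + \<epsilon> *\<^sub>R (r - \<delta> *\<^sub>R 1))"
      using e d by (intro pos_add pos_conj pos_scaleR) simp_all
    ultimately show ?case using e d by (intro exI[of _ "\<epsilon> * \<delta>"]) simp
  qed
  then show ?thesis using pos_margin_invble by blast
qed
lemma sic: "st (inv_el (c k)) = inv_el (c k)" by (rule sa_inv[OF ic sc_k])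
lemma pic: "pos (inv_el (c k))" by (rule pos_inv[OF pc ic])

lemma p_def': "p k = T ^ k * inv_el (c k) * A ^ k" by (simp add: pk_def)
lemma u_def': "u k = T ^ Suc k * inv_el (c k) * A ^ Suc k" by (simp add: uk_def)
lemma v_def': "v k = T ^ k * inv_el (c k) * c (Suc k) * inv_el (c k) * A ^ k" by (simp add: vk_def)

lemma sp: "st (p k) = p k" by (simp add: p_def' st_powT st_powA sic mult.assoc)
lemma pp: "p k * p k = p k"
proof -
  have "p k * p k = T ^ k * inv_el (c k) * (A ^ k * T ^ k) * inv_el (c k) * A ^ k"
    by (simp only: p_def' mult.assoc)
  also have "\<dots> = T ^ k * inv_el (c k) * c k * inv_el (c k) * A ^ k" by (simp only: c_def')
  also have "\<dots> = T ^ k * inv_el (c k) * A ^ k" using ic by (simp add: mult.assoc)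
  also have "\<dots> = p k" by (simp only: p_def')
  finally show ?thesis .
qed
lemma pT: "p k * T ^ Suc k = T ^ Suc k"
proof -
  have "p k * T ^ Suc k = T ^ k * inv_el (c k) * (A ^ k * T ^ k) * T"
    by (simp only: p_def' power_Suc2[of T k] mult.assoc)
  also have "\<dots> = T ^ k * inv_el (c k) * c k * T" by (simp only: c_def')
  also have "\<dots> = T ^ k * T" using ic by (simp add: mult.assoc)
  also have "\<dots> = T ^ Suc k" by (simp only: power_Suc2)
  finally show ?thesis .
qed
lemma pp1: "p k * p (Suc k) = p (Suc k)"
proof -
  have "p k * p (Suc k) = (p k * T ^ Suc k) * inv_el (c (Suc k)) * A ^ Suc k"
    by (simp only: p_def'[of "Suc k"] mult.assoc)
  then show ?thesis by (simp only: pT p_def'[of "Suc k"])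
qed
lemma p1p: "p (Suc k) * p k = p (Suc k)"
proof -
  have "st (p k * p (Suc k)) = st (p (Suc k))" by (simp only: pp1)
  then show ?thesis by (simp add: sp)
qed
lemma pos_p: "pos (p k)" by (rule pos_proj[OF sp pp])
lemma pos_pp: "pos (p k - p (Suc k))"
proof (rule pos_proj)
  show "st (p k - p (Suc k)) = p k - p (Suc k)" by (simp add: sp)
  show "(p k - p (Suc k)) * (p k - p (Suc k)) = p k - p (Suc k)"
    by (simp add: algebra_simps pp pp1 p1p)
qed
lemma pos_1p: "pos (1 - p k)"
proof (rule pos_proj)
  show "st (1 - p k) = 1 - p k" by (simp add: sp)
  show "(1 - p k) * (1 - p k) = 1 - p k" by (simp add: algebra_simps pp)
qed

lemma u_eq: "u k = T * p k * A"
  by (simp only: u_def' p_def' power_Suc[of T k] power_Suc2[of A k] mult.assoc)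
lemma su: "st (u k) = u k" by (simp add: u_eq sp mult.assoc)
lemma pos_TA: "pos (T ^ Suc k * A ^ Suc k)"
proof -
  have "T ^ Suc k * A ^ Suc k = st (A ^ Suc k) * A ^ Suc k" by (simp only: st_powA)
  then show ?thesis using pos_star by (simp only:)
qed
lemma st_TA: "st (T ^ Suc k * A ^ Suc k) = T ^ Suc k * A ^ Suc k"
  by (simp only: st_mult st_powA st_powT)
lemma pos_uTA: "pos (u k - T ^ Suc k * A ^ Suc k)"
proof -
  have q: "pos (inv_el (c k) - 1)" by (rule inv_le_one[OF pc ic p1c])
  have "u k - T ^ Suc k * A ^ Suc k = st (A ^ Suc k) * (inv_el (c k) - 1) * A ^ Suc k"
    by (simp only: st_powA) (simp add: u_def' algebra_simps)
  then show ?thesis using pos_conj[OF q] by (simp only:)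
qed
lemma pos_pu: "pos (p (Suc k) - u k)"
proof -
  have q: "pos (inv_el (c (Suc k)) - inv_el (c k))" by (rule inv_antimono[OF pc ic ic pcc])
  have "p (Suc k) - u k = st (A ^ Suc k) * (inv_el (c (Suc k)) - inv_el (c k)) * A ^ Suc k"
    by (simp only: st_powA) (simp add: u_def' p_def' algebra_simps)
  then show ?thesis using pos_conj[OF q] by (simp only:)
qed
lemma pos_uu: "pos (u k - u (Suc k))"
proof -
  have "u k - u (Suc k) = st A * (p k - p (Suc k)) * A"
    by (simp only: u_eq stA) (simp add: algebra_simps)
  then show ?thesis using pos_conj[OF pos_pp] by (simp only:)
qed

lemma v_eq: "v k = p k * A * T * p k"
proof -
  have "p k * A * T * p k = T ^ k * inv_el (c k) * (A ^ k * A * T * T ^ k) * inv_el (c k) * A ^ k"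
    by (simp only: p_def' mult.assoc)
  also have "A ^ k * A * T * T ^ k = c (Suc k)"
    by (simp only: c_def' power_Suc2[of A k] power_Suc[of T k] mult.assoc)
  finally show ?thesis by (simp only: v_def' mult.assoc)
qed
lemma v_Suc: "v (Suc k) = p (Suc k) * v k * p (Suc k)"
proof -
  have "p (Suc k) * v k * p (Suc k) = (p (Suc k) * p k) * A * T * (p k * p (Suc k))"
    by (simp only: v_eq[of k] mult.assoc)
  then show ?thesis by (simp only: p1p pp1 v_eq[of "Suc k"])
qed
lemma sv: "st (v k) = v k" by (simp add: v_eq sp mult.assoc)
lemma pos_v: "pos (v k)"
proof -
  have "v k = st (T * p k) * (T * p k)" by (simp add: v_eq sp mult.assoc)
  then show ?thesis using pos_star by (simp only:)
qed
lemma pos_pv: "pos (p k - v k)"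
proof -
  have "p k - v k = st (p k) * (1 - r) * p k"
    by (simp add: v_eq sp algebra_simps pp AT[symmetric] mult.assoc)
  then show ?thesis using pos_conj[OF p1r] by (simp only:)
qed

lemma sqrt_part: "le_in sc st UNIV (inv_el (psqrt sc st (c k)) * c (Suc k) * inv_el (psqrt sc st (c k))) 1"
proof -
  have ps: "psqrt sc st (c k) = psq (c k)" by (rule psqrt_eq[OF pc ic])
  define d where "d = psq (c k)"
  have dd: "d * d = c k" and sd: "st d = d" unfolding d_def by (rule psq_props(1)[OF pc], rule psq_props(2)[OF pc])
  have id: "invble d"
  proof (rule invble_left_right(1))
    show "d * (d * inv_el (c k)) = 1" using ic by (simp add: mult.assoc[symmetric] dd)
    show "(inv_el (c k) * d) * d = 1" using ic by (simp add: mult.assoc dd)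
  qed
  define di where "di = inv_el d"
  have sdi: "st di = di" unfolding di_def by (rule sa_inv[OF id sd])
  have one: "di * c k * di = 1" using id by (simp add: dd[symmetric] di_def mult.assoc)
  have "1 - di * c (Suc k) * di = st di * (c k - c (Suc k)) * di"
    by (simp add: sdi algebra_simps one[unfolded mult.assoc])
  then have "pos (1 - di * c (Suc k) * di)" using pos_conj[OF pcc] by (simp only:)
  moreover have "st (di * c (Suc k) * di) = di * c (Suc k) * di" by (simp add: sdi sc_k mult.assoc)
  ultimately show ?thesis unfolding le_UNIV ps by (simp add: d_def[symmetric] di_def[symmetric])
qed

end

context cstar begin

lemma gen_subalg: "cstar_subalg sc st (cstar_gen sc st t)"
  unfolding cstar_gen_def cstar_subalg_def[of sc st "\<Inter> _"]
  by (intro conjI closed_Inter) (auto simp: cstar_subalg_def)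

lemma gen_t: "t \<in> cstar_gen sc st t"
  unfolding cstar_gen_def by blast

end

context prob begin

abbreviation "B \<equiv> cstar_gen sc st t"

lemma sB: "cstar_subalg sc st B" by (rule gen_subalg)
lemma tB: "t \<in> B" by (rule gen_t)
lemma sBm: "s \<in> B" by (intro sub_mult sub_st sB tB)
lemma rB: "r \<in> B" by (rule permanence[OF sB sBm inv_s])
lemma TB: "T \<in> B" unfolding T_def' by (intro sub_mult sB tB rB)
lemma AB: "A \<in> B" by (intro sub_st sB TB)
lemma cB: "c k \<in> B" unfolding c_def' by (intro sub_mult sB subalg_pow AB TB)
lemma icB: "inv_el (c k) \<in> B" by (rule permanence[OF sB cB ic])
lemma pB: "p k \<in> B" unfolding p_def' by (intro sub_mult sB subalg_pow AB TB icB)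
lemma uB: "u k \<in> B" unfolding u_def' by (intro sub_mult sB subalg_pow AB TB icB)
lemma vB: "v k \<in> B" unfolding v_def' by (intro sub_mult sB subalg_pow AB TB icB cB)

lemma le_B: "le_in sc st B 1 s"
  unfolding le_in_def
proof (intro conjI)
  show "1 \<in> B" by (rule sub_one[OF sB])
  show "s \<in> B" by (rule sBm)
  show "st 1 = 1" by simp
  show "st s = s" by simp
  show "positive_in sc st B (s - 1)" by (rule pos_sub[OF sB sub_diff[OF sB sBm sub_one[OF sB]] ps1])
qed

lemma main_all: "(\<forall>k::nat.
      p k = st (p k) * p k \<and>
      p k * p (k + 1) = p (k + 1) \<and>
      le_in sc st UNIV 0 (p (k + 1)) \<and>
      le_in sc st UNIV (p (k + 1)) (p k) \<and>
      le_in sc st UNIV (p k) 1 \<and>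
      le_in sc st UNIV 0 (c (k + 1)) \<and>
      le_in sc st UNIV (c (k + 1)) (c k) \<and>
      le_in sc st UNIV (c k) 1 \<and>
      le_in sc st UNIV
        (inv_el (psqrt sc st (c k)) * c (k + 1) *
         inv_el (psqrt sc st (c k))) 1 \<and>
      u k = T * p k * A \<and>
      le_in sc st UNIV 0 (T ^ (k + 1) * A ^ (k + 1)) \<and>
      le_in sc st UNIV (T ^ (k + 1) * A ^ (k + 1)) (u k) \<and>
      le_in sc st UNIV (u k) (p (k + 1)) \<and>
      le_in sc st UNIV (p (k + 1)) 1 \<and>
      le_in sc st UNIV (u (k + 1)) (u k) \<and>
      v (k + 1) = p (k + 1) * v k * p (k + 1) \<and>
      v k = p k * A * T * p k \<and>
      le_in sc st UNIV 0 (v k) \<and>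
      le_in sc st UNIV (v k) (p k) \<and>
      le_in sc st UNIV (p k) 1)
    \<and> t \<in> B
    \<and> le_in sc st B 1 s
    \<and> T \<in> B
    \<and> (\<forall>k::nat.
         c k \<in> B \<and>
         inv_el (c k) \<in> B \<and>
         p k \<in> B \<and>
         u k \<in> B \<and>
         v k \<in> B)"
  unfolding Suc_eq_plus1[symmetric]
proof (intro conjI allI tB le_B TB cB icB pB uB vB)
  fix k
  show "p k = st (p k) * p k" by (simp only: sp pp)
  show "p k * p (Suc k) = p (Suc k)" by (rule pp1)
  show "le_in sc st UNIV 0 (p (Suc k))" unfolding le_UNIV using sp pos_p by simp
  show "le_in sc st UNIV (p (Suc k)) (p k)" unfolding le_UNIV using sp pos_pp by simp
  show "le_in sc st UNIV (p k) 1" unfolding le_UNIV using sp pos_1p by simp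
  show "le_in sc st UNIV (p (Suc k)) 1" unfolding le_UNIV using sp pos_1p by simp
  show "le_in sc st UNIV 0 (c (Suc k))" unfolding le_UNIV using sc_k pc by simp
  show "le_in sc st UNIV (c (Suc k)) (c k)" unfolding le_UNIV using sc_k pcc by simp
  show "le_in sc st UNIV (c k) 1" unfolding le_UNIV using sc_k p1c by simp
  show "le_in sc st UNIV (inv_el (psqrt sc st (c k)) * c (Suc k) * inv_el (psqrt sc st (c k))) 1"
    by (rule sqrt_part)
  show "u k = T * p k * A" by (rule u_eq)
  show "le_in sc st UNIV 0 (T ^ Suc k * A ^ Suc k)"
    unfolding le_UNIV using st_TA[of k] pos_TA[of k] by (simp only: st_zero diff_zero simp_thms)
  show "le_in sc st UNIV (T ^ Suc k * A ^ Suc k) (u k)"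
    unfolding le_UNIV using st_TA[of k] su[of k] pos_uTA[of k] by (intro conjI)
  show "le_in sc st UNIV (u k) (p (Suc k))" unfolding le_UNIV using su sp pos_pu by simp
  show "le_in sc st UNIV (u (Suc k)) (u k)" unfolding le_UNIV using su pos_uu by simp
  show "v (Suc k) = p (Suc k) * v k * p (Suc k)" by (rule v_Suc)
  show "v k = p k * A * T * p k" by (rule v_eq)
  show "le_in sc st UNIV 0 (v k)" unfolding le_UNIV using sv pos_v by simp
  show "le_in sc st UNIV (v k) (p k)" unfolding le_UNIV using sv sp pos_pv by simp
next
  fix k
  show "le_in sc st UNIV (p k) 1" unfolding le_UNIV using sp pos_1p by simp
qed

end

theorem proposition8p3:
  fixes scaleC :: "complex \<Rightarrow> 'a::{banach, real_normed_algebra_1} \<Rightarrow> 'a"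
    and star :: "'a \<Rightarrow> 'a" and t :: 'a
  assumes C: "cstar_algebra scaleC star"
    and exp: "le_in scaleC star UNIV 1 (star t * t)"
  shows "(\<forall>k::nat.
      \<comment> \<open>(i)\<close>
      pk star t k = star (pk star t k) * pk star t k \<and>
      pk star t k * pk star t (k + 1) = pk star t (k + 1) \<and>
      le_in scaleC star UNIV 0 (pk star t (k + 1)) \<and>
      le_in scaleC star UNIV (pk star t (k + 1)) (pk star t k) \<and>
      le_in scaleC star UNIV (pk star t k) 1 \<and>
      \<comment> \<open>(ii)\<close>
      le_in scaleC star UNIV 0 (ck star t (k + 1)) \<and>
      le_in scaleC star UNIV (ck star t (k + 1)) (ck star t k) \<and>
      le_in scaleC star UNIV (ck star t k) 1 \<and>
      le_in scaleC star UNIV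
        (inv_el (psqrt scaleC star (ck star t k)) * ck star t (k + 1) *
         inv_el (psqrt scaleC star (ck star t k))) 1 \<and>
      \<comment> \<open>(iii)\<close>
      uk star t k = tp star t * pk star t k * star (tp star t) \<and>
      le_in scaleC star UNIV 0 ((tp star t) ^ (k + 1) * (star (tp star t)) ^ (k + 1)) \<and>
      le_in scaleC star UNIV ((tp star t) ^ (k + 1) * (star (tp star t)) ^ (k + 1)) (uk star t k) \<and>
      le_in scaleC star UNIV (uk star t k) (pk star t (k + 1)) \<and>
      le_in scaleC star UNIV (pk star t (k + 1)) 1 \<and>
      le_in scaleC star UNIV (uk star t (k + 1)) (uk star t k) \<and>
      \<comment> \<open>(iv)\<close>
      vk star t (k + 1) = pk star t (k + 1) * vk star t k * pk star t (k + 1) \<and>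
      vk star t k = pk star t k * star (tp star t) * tp star t * pk star t k \<and>
      le_in scaleC star UNIV 0 (vk star t k) \<and>
      le_in scaleC star UNIV (vk star t k) (pk star t k) \<and>
      le_in scaleC star UNIV (pk star t k) 1)
    \<and> t \<in> cstar_gen scaleC star t
    \<and> le_in scaleC star (cstar_gen scaleC star t) 1 (star t * t)
    \<and> tp star t \<in> cstar_gen scaleC star t
    \<and> (\<forall>k::nat.
         ck star t k \<in> cstar_gen scaleC star t \<and>
         inv_el (ck star t k) \<in> cstar_gen scaleC star t \<and>
         pk star t k \<in> cstar_gen scaleC star t \<and>
         uk star t k \<in> cstar_gen scaleC star t \<and>
         vk star t k \<in> cstar_gen scaleC star t)"
proof -
  interpret P: prob scaleC star t
    using C exp by (simp add: prob_def cstar_def prob_axioms_def)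
  show ?thesis by (rule P.main_all)
qed

end
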